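(* Let $X$ be a real Hilbert space, let $\mu\ge\omega\ge0$ and $\beta>0$. Let $f\colon X\to\mathbb{R}$ be $\mu$-strongly convex and Fréchet differentiable with $\beta$-Lipschitz continuous gradient, and let $g\colon X\to\left]-\infty,+\infty\right]$ be proper, lower semicontinuous and $\omega$-hypoconvex. Suppose $\operatorname{argmin}(f+g)\neq\varnothing$. Let $\gamma\in\left]0,\frac2{\beta+2\mu}\right[$, set $\delta=\frac{1-\gamma\mu}{1-\gamma\omega}$ and $T=\operatorname{prox}_{\gamma g}(\mathrm{Id}-\gamma\nabla f)$, and let $x_0\in X$. Then $\operatorname{Fix}T=\operatorname{argmin}(f+g)$ and there exists $\bar x\in\operatorname{argmin}(f+g)$ with $T^nx_0\rightharpoonup\bar x$. If moreover $\mu>\omega$, then $\operatorname{argmin}(f+g)=\{\bar x\}$ and $T^nx_0\to\bar x$ with linear rate $\delta<1$.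
   Context: $g$ is $\omega$-hypoconvex if $g+\tfrac\omega2\|\cdot\|^2$ is convex. For $\gamma>0$ with $\gamma\omega<1$, $\operatorname{prox}_{\gamma g}(x)=\operatorname{argmin}_{y\in X}\big(g(y)+\tfrac1{2\gamma}\|x-y\|^2\big)$, which is single-valued with full domain. $f$ is $\mu$-strongly convex if $f-\tfrac\mu2\|\cdot\|^2$ is convex. *)

theory Defs
  imports "HOL-Analysis.Analysis"
begin

(* Extended-real-valued functions g : X -> ]-inf,+inf] are modelled as 'a => ereal
   with g x \<noteq> -\<infinity> for all x. *)

definition proper_fun :: "('a \<Rightarrow> ereal) \<Rightarrow> bool" where
  "proper_fun g \<longleftrightarrow> (\<forall>x. g x \<noteq> -\<infinity>) \<and> (\<exists>x. g x \<noteq> \<infinity>)"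

definition lsc_fun :: "('a::topological_space \<Rightarrow> ereal) \<Rightarrow> bool" where
  "lsc_fun g \<longleftrightarrow> (\<forall>c. closed {x. g x \<le> c})"

definition ereal_convex :: "('a::real_vector \<Rightarrow> ereal) \<Rightarrow> bool" where
  "ereal_convex h \<longleftrightarrow> (\<forall>x y t. 0 \<le> t \<and> t \<le> 1 \<longrightarrow>
      h (t *\<^sub>R x + (1 - t) *\<^sub>R y) \<le> ereal t * h x + ereal (1 - t) * h y)"

definition hypoconvex :: "real \<Rightarrow> ('a::real_normed_vector \<Rightarrow> ereal) \<Rightarrow> bool" where
  "hypoconvex \<omega> g \<longleftrightarrow> ereal_convex (\<lambda>x. g x + ereal (\<omega> / 2 * (norm x)\<^sup>2))"

definition strongly_convex :: "real \<Rightarrow> ('a::real_normed_vector \<Rightarrow> real) \<Rightarrow> bool" where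
  "strongly_convex \<mu> f \<longleftrightarrow> convex_on UNIV (\<lambda>x. f x - \<mu> / 2 * (norm x)\<^sup>2)"

(* prox_{\<gamma> g}(x) = argmin_y ( g y + 1/(2\<gamma>) \<parallel>x - y\<parallel>^2 ), single-valued when \<gamma>\<omega> < 1 *)
definition prox :: "real \<Rightarrow> ('a::real_normed_vector \<Rightarrow> ereal) \<Rightarrow> 'a \<Rightarrow> 'a" where
  "prox \<gamma> g x = (THE p. \<forall>y. g p + ereal ((norm (x - p))\<^sup>2 / (2 * \<gamma>))
                              \<le> g y + ereal ((norm (x - y))\<^sup>2 / (2 * \<gamma>)))"

definition argmin_sum :: "('a \<Rightarrow> real) \<Rightarrow> ('a \<Rightarrow> ereal) \<Rightarrow> 'a set" where
  "argmin_sum f g = {x. \<forall>y. ereal (f x) + g x \<le> ereal (f y) + g y}"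

definition fixpoints :: "('a \<Rightarrow> 'a) \<Rightarrow> 'a set" where
  "fixpoints T = {x. T x = x}"

definition weakly_converges :: "(nat \<Rightarrow> 'a::real_inner) \<Rightarrow> 'a \<Rightarrow> bool" where
  "weakly_converges xs x \<longleftrightarrow> (\<forall>y. (\<lambda>n. inner (xs n) y) \<longlonglongrightarrow> inner x y)"

end

theory Submission
  imports Defs "HOL-Library.Diagonal_Subsequence"
begin

lemma line_deriv:
  fixes f :: "'a::real_inner \<Rightarrow> real"
  assumes D: "\<And>x. (f has_derivative (\<lambda>h. inner (G x) h)) (at x)"
  shows "((\<lambda>t. f (x + t *\<^sub>R d)) has_real_derivative inner (G (x + t *\<^sub>R d)) d) (at t)"
proof -
  have "((\<lambda>t. x + t *\<^sub>R d) has_derivative (\<lambda>h. h *\<^sub>R d)) (at t)"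
    by (auto intro!: derivative_eq_intros)
  from has_derivative_compose[OF this D]
  have "((\<lambda>t. f (x + t *\<^sub>R d)) has_derivative (\<lambda>h. inner (G (x + t *\<^sub>R d)) (h *\<^sub>R d))) (at t)" .
  then show ?thesis
    by (rule has_derivative_imp_has_field_derivative) simp
qed

lemma descent:
  fixes f :: "'a::real_inner \<Rightarrow> real"
  assumes D: "\<And>x. (f has_derivative (\<lambda>h. inner (G x) h)) (at x)"
    and L: "\<beta>-lipschitz_on UNIV G"
  shows "f y \<le> f x + inner (G x) (y - x) + \<beta>/2 * (norm (y - x))\<^sup>2"
proof -
  define d where "d = y - x"
  define \<phi> where "\<phi> t = f (x + t *\<^sub>R d) - t * inner (G x) d - \<beta>/2 * t^2 * (norm d)\<^sup>2" for t
  have "\<phi> 1 \<le> \<phi> 0"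
  proof (rule DERIV_nonpos_imp_nonincreasing[of 0 1 \<phi>])
    fix t :: real assume t: "0 \<le> t" "t \<le> 1"
    have "(\<phi> has_real_derivative (inner (G (x + t *\<^sub>R d)) d - inner (G x) d - \<beta> * t * (norm d)\<^sup>2)) (at t)"
      unfolding \<phi>_def
      by (auto intro!: derivative_eq_intros line_deriv[OF D] simp: power2_eq_square)
    moreover have "inner (G (x + t *\<^sub>R d)) d - inner (G x) d \<le> \<beta> * t * (norm d)\<^sup>2"
    proof -
      have "inner (G (x + t *\<^sub>R d)) d - inner (G x) d = inner (G (x + t *\<^sub>R d) - G x) d"
        by (simp add: inner_diff_left)
      also have "\<dots> \<le> norm (G (x + t *\<^sub>R d) - G x) * norm d" by (rule norm_cauchy_schwarz)
      also have "norm (G (x + t *\<^sub>R d) - G x) \<le> \<beta> * norm (t *\<^sub>R d)"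
        using lipschitz_onD[OF L, of "x + t *\<^sub>R d" x] by (simp add: dist_norm)
      hence "norm (G (x + t *\<^sub>R d) - G x) * norm d \<le> \<beta> * norm (t *\<^sub>R d) * norm d"
        by (simp add: mult_right_mono)
      also have "\<dots> = \<beta> * t * (norm d)\<^sup>2" using t by (simp add: power2_eq_square)
      finally show ?thesis .
    qed
    ultimately show "\<exists>y. DERIV \<phi> t :> y \<and> y \<le> 0" by force
  qed simp
  then show ?thesis unfolding \<phi>_def d_def by (simp add: algebra_simps)
qed

lemma convex_tangent:
  fixes k :: "'a::real_inner \<Rightarrow> real"
  assumes C: "convex_on UNIV k"
    and D: "\<And>x. (k has_derivative (\<lambda>h. inner (G x) h)) (at x)"
  shows "k x + inner (G x) (y - x) \<le> k y"
proof -
  define d where "d = y - x"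
  define \<phi> where "\<phi> t = k (x + t *\<^sub>R d)" for t
  have "convex_on UNIV \<phi>"
  proof (rule convex_onI)
    fix t a b :: real assume t: "0 < t" "t < 1"
    have "x + ((1 - t) *\<^sub>R a + t *\<^sub>R b) *\<^sub>R d = (1 - t) *\<^sub>R (x + a *\<^sub>R d) + t *\<^sub>R (x + b *\<^sub>R d)"
      by (simp add: algebra_simps)
    then show "\<phi> ((1 - t) *\<^sub>R a + t *\<^sub>R b) \<le> (1 - t) * \<phi> a + t * \<phi> b"
      unfolding \<phi>_def using convex_onD[OF C, of t] t by simp
  qed simp
  moreover have "(\<phi> has_real_derivative inner (G x) d) (at 0 within UNIV)"
    unfolding \<phi>_def using line_deriv[OF D, of x d 0] by simp
  ultimately have "\<phi> 1 - \<phi> 0 \<ge> inner (G x) d * (1 - 0)"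
    by (intro convex_on_imp_above_tangent[where A=UNIV]) auto
  then show ?thesis unfolding \<phi>_def d_def by simp
qed

lemma sq_deriv:
  "((\<lambda>x::'a::real_inner. c/2 * (norm x)\<^sup>2) has_derivative (\<lambda>h. inner (c *\<^sub>R x) h)) (at x)"
proof -
  have "((\<lambda>x::'a. c/2 * inner x x) has_derivative (\<lambda>h. c/2 * (inner h x + inner x h))) (at x)"
    by (auto intro!: derivative_eq_intros)
  then show ?thesis
    by (simp add: power2_norm_eq_inner inner_commute algebra_simps)
qed

lemma sc_lower:
  fixes f :: "'a::real_inner \<Rightarrow> real"
  assumes C: "strongly_convex \<mu> f"
    and D: "\<And>x. (f has_derivative (\<lambda>h. inner (G x) h)) (at x)"
  shows "f x + inner (G x) (y - x) + \<mu>/2 * (norm (y - x))\<^sup>2 \<le> f y"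
proof -
  have D2: "((\<lambda>x. f x - \<mu>/2 * (norm x)\<^sup>2) has_derivative (\<lambda>h. inner (G x - \<mu> *\<^sub>R x) h)) (at x)" for x
    using has_derivative_diff[OF D sq_deriv] by (simp add: inner_diff_left)
  have "(f x - \<mu>/2 * (norm x)\<^sup>2) + inner (G x - \<mu> *\<^sub>R x) (y - x) \<le> f y - \<mu>/2 * (norm y)\<^sup>2"
    by (rule convex_tangent[OF C[unfolded strongly_convex_def] D2])
  then show ?thesis
    by (simp add: power2_norm_eq_inner inner_diff_left inner_diff_right inner_commute algebra_simps)
qed

lemma coco_key:
  fixes h :: "'a::real_inner \<Rightarrow> real"
  assumes lo: "\<And>x z. h x + inner (H x) (z - x) \<le> h z"
    and up: "\<And>x z. h z \<le> h x + inner (H x) (z - x) + \<beta>/2 * (norm (z - x))\<^sup>2"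
    and b: "\<beta> > 0"
  shows "h x + inner (H x) (y - x) + (norm (H y - H x))\<^sup>2 / (2*\<beta>) \<le> h y"
proof -
  define e where "e = H y - H x"
  define z where "z = y - (1/\<beta>) *\<^sub>R e"
  have 1: "h x + inner (H x) (z - x) \<le> h z" by (rule lo)
  have 2: "h z \<le> h y + inner (H y) (z - y) + \<beta>/2 * (norm (z - y))\<^sup>2" by (rule up)
  have a: "inner (H x) (z - x) = inner (H x) (y - x) - inner (H x) e / \<beta>"
    unfolding z_def by (simp add: inner_diff_right algebra_simps)
  have c: "inner (H y) (z - y) = - inner (H y) e / \<beta>"
    unfolding z_def by (simp add: inner_diff_right algebra_simps)
  have d: "\<beta>/2 * (norm (z - y))\<^sup>2 = (norm e)\<^sup>2 / (2*\<beta>)"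
    unfolding z_def using b by (simp add: power2_eq_square field_simps)
  have f: "inner (H y) e - inner (H x) e = (norm e)\<^sup>2"
    unfolding e_def by (simp add: power2_norm_eq_inner inner_diff_left)
  from 1 2 a c d have "h x + inner (H x) (y - x) + (inner (H y) e - inner (H x) e)/\<beta> - (norm e)\<^sup>2 / (2*\<beta>) \<le> h y"
    by (simp add: diff_divide_distrib)
  also note f
  finally have "h x + inner (H x) (y - x) + (norm e)\<^sup>2/\<beta> - (norm e)\<^sup>2 / (2*\<beta>) \<le> h y" .
  moreover have "(norm e)\<^sup>2/\<beta> - (norm e)\<^sup>2 / (2*\<beta>) = (norm e)\<^sup>2 / (2*\<beta>)"
    using b by (simp add: field_simps)
  ultimately show ?thesis unfolding e_def by linarith
qed

lemma coco_abs:
  fixes h :: "'a::real_inner \<Rightarrow> real"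
  assumes lo: "\<And>x z. h x + inner (H x) (z - x) \<le> h z"
    and up: "\<And>x z. h z \<le> h x + inner (H x) (z - x) + \<beta>/2 * (norm (z - x))\<^sup>2"
    and b: "\<beta> > 0"
  shows "(norm (H x - H y))\<^sup>2 \<le> \<beta> * inner (H x - H y) (x - y)"
proof -
  have 1: "h x + inner (H x) (y - x) + (norm (H y - H x))\<^sup>2 / (2*\<beta>) \<le> h y"
    by (rule coco_key[OF lo up b])
  have 2: "h y + inner (H y) (x - y) + (norm (H x - H y))\<^sup>2 / (2*\<beta>) \<le> h x"
    by (rule coco_key[OF lo up b])
  have n: "norm (H y - H x) = norm (H x - H y)" by (rule norm_minus_commute)
  have i: "inner (H x) (y - x) + inner (H y) (x - y) = - inner (H x - H y) (x - y)"
    by (simp add: inner_diff_left inner_diff_right algebra_simps)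
  from 1 2 n i have "(norm (H x - H y))\<^sup>2 / \<beta> \<le> inner (H x - H y) (x - y)"
    by (simp add: field_simps)
  then show ?thesis using b by (simp add: field_simps)
qed

lemma cocoercive:
  fixes f :: "'a::real_inner \<Rightarrow> real"
  assumes C: "strongly_convex \<mu> f"
    and D: "\<And>x. (f has_derivative (\<lambda>h. inner (G x) h)) (at x)"
    and L: "\<beta>-lipschitz_on UNIV G" and m: "\<mu> \<ge> 0" and b: "\<beta> > 0"
  shows "(norm ((G x - \<mu> *\<^sub>R x) - (G y - \<mu> *\<^sub>R y)))\<^sup>2
     \<le> \<beta> * inner ((G x - \<mu> *\<^sub>R x) - (G y - \<mu> *\<^sub>R y)) (x - y)"
proof -
  define h where "h z = f z - \<mu>/2 * (norm z)\<^sup>2" for z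
  define H where "H z = G z - \<mu> *\<^sub>R z" for z
  have sq: "\<mu>/2 * (norm z)\<^sup>2 = \<mu>/2 * (norm x)\<^sup>2 + inner (\<mu> *\<^sub>R x) (z - x) + \<mu>/2 * (norm (z - x))\<^sup>2" for x z
    by (simp add: power2_norm_eq_inner inner_diff_left inner_diff_right inner_commute algebra_simps)
  have lo: "h x + inner (H x) (z - x) \<le> h z" for x z
    using sc_lower[OF C D, of x z] sq[of z x] unfolding h_def H_def
    by (simp add: inner_diff_left algebra_simps)
  have up: "h z \<le> h x + inner (H x) (z - x) + \<beta>/2 * (norm (z - x))\<^sup>2" for x z
  proof -
    have "\<mu>/2 * (norm (z - x))\<^sup>2 \<ge> 0" using m by simp
    then show ?thesis
    using descent[OF D L, of z x] sq[of z x] unfolding h_def H_def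
    by (simp add: inner_diff_left algebra_simps)
  qed
  show ?thesis using coco_abs[OF lo up b, of x y] unfolding H_def .
qed

lemma ec_real:
  assumes C: "ereal_convex \<phi>" and ninf: "\<And>x. \<phi> x \<noteq> -\<infinity>"
    and "\<phi> x = ereal a" "\<phi> y = ereal b" "0 \<le> t" "t \<le> 1"
  shows "\<exists>c. \<phi> (t *\<^sub>R x + (1 - t) *\<^sub>R y) = ereal c \<and> c \<le> t*a + (1-t)*b"
proof -
  have "\<phi> (t *\<^sub>R x + (1 - t) *\<^sub>R y) \<le> ereal t * \<phi> x + ereal (1 - t) * \<phi> y"
    using C assms unfolding ereal_convex_def by blast
  also have "\<dots> = ereal (t*a + (1-t)*b)" using assms by simp
  finally have le: "\<phi> (t *\<^sub>R x + (1 - t) *\<^sub>R y) \<le> ereal (t*a + (1-t)*b)" .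
  then obtain c where "\<phi> (t *\<^sub>R x + (1 - t) *\<^sub>R y) = ereal c"
    using ninf by (cases "\<phi> (t *\<^sub>R x + (1 - t) *\<^sub>R y)") auto
  with le show ?thesis by auto
qed

lemma eps_nonneg:
  fixes X C :: real
  assumes "\<And>t. 0 < t \<Longrightarrow> t \<le> 1 \<Longrightarrow> 0 \<le> X + t * C"
  shows "0 \<le> X"
proof (rule ccontr)
  assume X: "\<not> 0 \<le> X"
  have C: "C \<ge> 0" using assms[of 1] X by simp
  define t where "t = min 1 (- X / (2*C + 1))"
  have "- X / (2*C + 1) > 0" using X C by (intro divide_pos_pos) auto
  hence t: "0 < t" "t \<le> 1" unfolding t_def by auto
  have "t * C \<le> (- X / (2*C + 1)) * C" using C unfolding t_def by (intro mult_right_mono) auto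
  also have "\<dots> < - X / 2" using X C by (simp add: field_simps)
  finally have "X + t * C < 0" using X by linarith
  with assms[OF t] show False by linarith
qed

lemma norm_sq_expand: "(norm (u - t *\<^sub>R v))\<^sup>2 = (norm u)\<^sup>2 - 2 * t * inner u v + t\<^sup>2 * (norm v)\<^sup>2"
  unfolding power2_norm_eq_inner by (simp add: inner_diff_left inner_diff_right inner_commute algebra_simps power2_eq_square)

lemma prox_vi:
  fixes \<phi> :: "'a::real_inner \<Rightarrow> ereal"
  assumes C: "ereal_convex \<phi>" and ninf: "\<And>x. \<phi> x \<noteq> -\<infinity>" and l: "\<tau> > 0"
    and min: "\<And>y. \<phi> p + ereal ((norm (a - p))\<^sup>2 / (2*\<tau>)) \<le> \<phi> y + ereal ((norm (a - y))\<^sup>2 / (2*\<tau>))"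
    and p: "\<phi> p = ereal qp" and y: "\<phi> y = ereal qy"
  shows "inner (a - p) (y - p) / \<tau> \<le> qy - qp"
proof -
  have "0 \<le> (qy - qp - inner (a - p) (y - p) / \<tau>) + t * ((norm (y - p))\<^sup>2 / (2*\<tau>))"
    if t: "0 < t" "t \<le> 1" for t
  proof -
    obtain c where c: "\<phi> (t *\<^sub>R y + (1 - t) *\<^sub>R p) = ereal c" "c \<le> t*qy + (1-t)*qp"
      using ec_real[OF C ninf y p, of t] t by auto
    have "ereal (qp + (norm (a - p))\<^sup>2 / (2*\<tau>)) \<le> ereal (c + (norm (a - (t *\<^sub>R y + (1 - t) *\<^sub>R p)))\<^sup>2 / (2*\<tau>))"
      using min[of "t *\<^sub>R y + (1 - t) *\<^sub>R p"] p c by simp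
    hence 1: "qp + (norm (a - p))\<^sup>2 / (2*\<tau>) \<le> c + (norm (a - (t *\<^sub>R y + (1 - t) *\<^sub>R p)))\<^sup>2 / (2*\<tau>)"
      by simp
    have "a - (t *\<^sub>R y + (1 - t) *\<^sub>R p) = (a - p) - t *\<^sub>R (y - p)" by (simp add: algebra_simps)
    hence 2: "(norm (a - (t *\<^sub>R y + (1 - t) *\<^sub>R p)))\<^sup>2 = (norm (a - p))\<^sup>2 - 2 * t * inner (a - p) (y - p) + t\<^sup>2 * (norm (y - p))\<^sup>2"
      using norm_sq_expand by metis
    define N where "N = (norm (a - (t *\<^sub>R y + (1 - t) *\<^sub>R p)))\<^sup>2"
    define N0 where "N0 = (norm (a - p))\<^sup>2"
    define R where "R = - 2 * t * inner (a - p) (y - p) + t\<^sup>2 * (norm (y - p))\<^sup>2"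
    have 3: "N / (2*\<tau>) = N0 / (2*\<tau>) + R / (2*\<tau>)" using 2 unfolding N_def N0_def R_def
      by (simp add: add_divide_distrib diff_divide_distrib)
    have "0 \<le> t*qy - t*qp + R / (2*\<tau>)" using 1 3 c(2) unfolding N_def[symmetric] N0_def[symmetric]
      by (simp add: algebra_simps)
    hence "0 \<le> t*qy - t*qp + (- 2 * t * inner (a - p) (y - p) + t\<^sup>2 * (norm (y - p))\<^sup>2) / (2*\<tau>)"
      unfolding R_def .
    also have "\<dots> = t * ((qy - qp - inner (a - p) (y - p) / \<tau>) + t * ((norm (y - p))\<^sup>2 / (2*\<tau>)))"
      using l by (simp add: field_simps power2_eq_square)
    finally show ?thesis using t by (simp add: zero_le_mult_iff)
  qed
  then have "0 \<le> qy - qp - inner (a - p) (y - p) / \<tau>" by (rule eps_nonneg)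
  then show ?thesis by simp
qed

lemma ereal_add_le_real:
  assumes "\<phi> + ereal r \<le> ereal c" shows "\<phi> \<le> ereal (c - r)"
  using assms by (cases \<phi>) auto


lemma lsc_add:
  fixes \<phi> :: "'a::metric_space \<Rightarrow> ereal"
  assumes L: "lsc_fun \<phi>" and ninf: "\<And>x. \<phi> x \<noteq> -\<infinity>" and q: "continuous_on UNIV q"
  shows "lsc_fun (\<lambda>x. \<phi> x + ereal (q x))"
  unfolding lsc_fun_def
proof
  fix c :: ereal
  show "closed {x. \<phi> x + ereal (q x) \<le> c}"
  proof (cases c)
    case (real c0)
    show ?thesis unfolding closed_sequential_limits
    proof (intro allI impI, elim conjE)
      fix s l assume s: "\<forall>n. s n \<in> {x. \<phi> x + ereal (q x) \<le> c}" and lim: "s \<longlonglongrightarrow> l"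
      have ql: "(\<lambda>n. q (s n)) \<longlonglongrightarrow> q l"
        using continuous_on_tendsto_compose[OF q lim] by simp
      have e: "\<phi> l \<le> ereal (c0 - q l + e)" if e: "e > 0" for e
      proof -
        have cl: "closed {x. \<phi> x \<le> ereal (c0 - q l + e)}" using L unfolding lsc_fun_def by blast
        have "eventually (\<lambda>n. q (s n) > q l - e) sequentially"
          using order_tendstoD(1)[OF ql, of "q l - e"] e by simp
        hence ev: "eventually (\<lambda>n. s n \<in> {x. \<phi> x \<le> ereal (c0 - q l + e)}) sequentially"
        proof (rule eventually_mono)
          fix n assume n: "q (s n) > q l - e"
          have "\<phi> (s n) \<le> ereal (c0 - q (s n))"
            using s real by (intro ereal_add_le_real) auto
          also have "\<dots> \<le> ereal (c0 - q l + e)" using n by simp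
          finally show "s n \<in> {x. \<phi> x \<le> ereal (c0 - q l + e)}" by simp
        qed
        have "l \<in> {x. \<phi> x \<le> ereal (c0 - q l + e)}"
          using Lim_in_closed_set[OF cl ev trivial_limit_sequentially lim] .
        then show ?thesis by simp
      qed
      show "l \<in> {x. \<phi> x + ereal (q x) \<le> c}"
      proof (cases "\<phi> l")
        case (real v)
        have "v \<le> c0 - q l"
        proof (rule field_le_epsilon)
          fix d :: real assume "d > 0"
          then have "\<phi> l \<le> ereal (c0 - q l + d)" by (rule e)
          with real show "v \<le> c0 - q l + d" by simp
        qed
        then show ?thesis using real \<open>c = ereal c0\<close> by simp
      next
        case PInf then show ?thesis using e[of 1] by simp
      next
        case MInf then show ?thesis using ninf by simp
      qed
    qed
  next
    case PInf then show ?thesis by simp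
  next
    case MInf
    have "{x. \<phi> x + ereal (q x) \<le> c} = {}"
    proof (safe)
      fix x assume "\<phi> x + ereal (q x) \<le> c"
      hence "\<phi> x + ereal (q x) = -\<infinity>" using MInf by simp
      thus "x \<in> {}" using ninf[of x] by simp
    qed
    then show ?thesis by simp
  qed
qed

lemma parallelogram_sq:
  fixes a y z :: "'a::real_inner"
  shows "(norm (a - ((1/2) *\<^sub>R y + (1/2) *\<^sub>R z)))\<^sup>2
       = ((norm (a - y))\<^sup>2 + (norm (a - z))\<^sup>2)/2 - (norm (y - z))\<^sup>2 / 4"
  unfolding power2_norm_eq_inner
  apply (simp add: inner_diff_left inner_diff_right inner_add_left inner_add_right inner_commute algebra_simps)
  apply (simp add: field_simps)
  done

lemma mid_ineq:
  fixes \<phi> :: "'a::real_inner \<Rightarrow> ereal"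
  assumes C: "ereal_convex \<phi>" and ninf: "\<And>x. \<phi> x \<noteq> -\<infinity>"
    and y: "\<phi> y = ereal u" and z: "\<phi> z = ereal w" and t: "\<tau> > 0"
  shows "\<exists>c. \<phi> ((1/2) *\<^sub>R y + (1/2) *\<^sub>R z) = ereal c \<and>
     c + (norm (a - ((1/2) *\<^sub>R y + (1/2) *\<^sub>R z)))\<^sup>2 / (2*\<tau>)
      \<le> ((u + (norm (a - y))\<^sup>2 / (2*\<tau>)) + (w + (norm (a - z))\<^sup>2 / (2*\<tau>)))/2 - (norm (y - z))\<^sup>2 / (8*\<tau>)"
proof -
  obtain c where c: "\<phi> ((1/2) *\<^sub>R y + (1 - 1/2) *\<^sub>R z) = ereal c" "c \<le> (1/2)*u + (1 - 1/2)*w"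
    using ec_real[OF C ninf y z, of "1/2"] by auto
  have "(norm (a - ((1/2) *\<^sub>R y + (1/2) *\<^sub>R z)))\<^sup>2 / (2*\<tau>)
       = (((norm (a - y))\<^sup>2 + (norm (a - z))\<^sup>2)/2 - (norm (y - z))\<^sup>2 / 4) / (2*\<tau>)"
    by (simp only: parallelogram_sq)
  also have "\<dots> = ((norm (a - y))\<^sup>2 / (2*\<tau>) + (norm (a - z))\<^sup>2 / (2*\<tau>))/2 - (norm (y - z))\<^sup>2 / (8*\<tau>)"
    using t by (simp add: field_simps)
  finally have eq: "(norm (a - ((1/2) *\<^sub>R y + (1/2) *\<^sub>R z)))\<^sup>2 / (2*\<tau>) = ((norm (a - y))\<^sup>2 / (2*\<tau>) + (norm (a - z))\<^sup>2 / (2*\<tau>))/2 - (norm (y - z))\<^sup>2 / (8*\<tau>)" .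
  have c1: "\<phi> ((1/2) *\<^sub>R y + (1/2) *\<^sub>R z) = ereal c" using c(1) by simp
  have c2: "c \<le> u/2 + w/2" using c(2) by simp
  show ?thesis
    apply (rule exI[of _ c])
    apply (rule conjI[OF c1])
    using c2 eq unfolding add_divide_distrib by linarith
qed

lemma ereal_fin:
  assumes "\<phi> \<noteq> \<infinity>" "\<phi> \<noteq> -\<infinity>" shows "\<phi> = ereal (real_of_ereal \<phi>)"
  using assms by (cases \<phi>) auto

lemma prox_ex1:
  fixes \<phi> :: "'a::{real_inner,complete_space} \<Rightarrow> ereal"
  assumes C: "ereal_convex \<phi>" and L: "lsc_fun \<phi>" and P: "proper_fun \<phi>" and t: "\<tau> > 0"
  shows "\<exists>!p. \<forall>y. \<phi> p + ereal ((norm (a - p))\<^sup>2 / (2*\<tau>)) \<le> \<phi> y + ereal ((norm (a - y))\<^sup>2 / (2*\<tau>))"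
proof -
  have ninf: "\<And>x. \<phi> x \<noteq> -\<infinity>" using P unfolding proper_fun_def by blast
  obtain x0 where "\<phi> x0 \<noteq> \<infinity>" using P unfolding proper_fun_def by blast
  then obtain m where m: "\<phi> x0 = ereal m" using ninf[of x0] by (cases "\<phi> x0") auto
  define q where "q y = (norm (a - y))\<^sup>2 / (2*\<tau>)" for y
  define F where "F y = \<phi> y + ereal (q y)" for y
  have qc: "continuous_on UNIV q" unfolding q_def using t by (intro continuous_intros) auto
  have FL: "lsc_fun F" unfolding F_def by (rule lsc_add[OF L ninf qc])
  have fin: "\<phi> y = ereal (real_of_ereal (\<phi> y))" if "\<phi> y \<noteq> \<infinity>" for y
    using ereal_fin[OF that ninf] .
  have "open (- {x. \<phi> x \<le> ereal (m - 1)})" using L unfolding lsc_fun_def by auto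
  moreover have "x0 \<in> - {x. \<phi> x \<le> ereal (m - 1)}" using m by simp
  ultimately obtain r where r: "r > 0" "ball x0 r \<subseteq> - {x. \<phi> x \<le> ereal (m - 1)}"
    using open_contains_ball by blast
  have near: "ereal (m - 1) < \<phi> y" if "norm (y - x0) < r" for y
    using r(2) that by (auto simp: dist_norm norm_minus_commute)
  have lowA: "m - 1 - 2 * norm (y - x0) / r \<le> v" if v: "\<phi> y = ereal v" for y v
  proof (cases "norm (y - x0) < r")
    case True
    then have "m - 1 < v" using near[of y] v by simp
    moreover have "0 \<le> 2 * norm (y - x0) / r" using r by simp
    ultimately show ?thesis by linarith
  next
    case False
    define s where "s = norm (y - x0)"
    have s: "s \<ge> r" "s > 0" using False r unfolding s_def by auto
    define t0 where "t0 = r / (2 * s)"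
    have t0: "0 < t0" "t0 \<le> 1" using s r unfolding t0_def by (auto simp: field_simps)
    obtain c where c: "\<phi> (t0 *\<^sub>R y + (1 - t0) *\<^sub>R x0) = ereal c" "c \<le> t0 * v + (1 - t0) * m"
      using ec_real[OF C ninf v m, of t0] t0 by auto
    have "t0 *\<^sub>R y + (1 - t0) *\<^sub>R x0 - x0 = t0 *\<^sub>R (y - x0)" by (simp add: algebra_simps)
    hence "norm (t0 *\<^sub>R y + (1 - t0) *\<^sub>R x0 - x0) = r / 2"
      using t0 s r unfolding t0_def s_def by simp
    hence "ereal (m - 1) < \<phi> (t0 *\<^sub>R y + (1 - t0) *\<^sub>R x0)" using r by (intro near) simp
    hence "m - 1 < t0 * v + (1 - t0) * m" using c by simp
    hence "-1 < t0 * (v - m)" by (simp add: algebra_simps)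
    hence "-1 / t0 < v - m" using t0 by (simp add: field_simps)
    moreover have "1 / t0 = 2 * s / r" unfolding t0_def using s r by simp
    ultimately show ?thesis unfolding s_def by simp
  qed
  define K where "K = m - 1 - 2*\<tau>/r^2 - 2 * norm (a - x0) / r"
  have lowB: "K \<le> v + q y" if v: "\<phi> y = ereal v" for y v
  proof -
    define u where "u = norm (a - y)"
    have su: "norm (y - x0) \<le> u + norm (a - x0)" unfolding u_def
      using norm_triangle_ineq[of "y - a" "a - x0"] by (simp add: norm_minus_commute)
    have "2 * u / r \<le> u^2 / (2*\<tau>) + 2*\<tau>/r^2"
    proof -
      have "0 \<le> (u - 2*\<tau>/r)^2 / (2*\<tau>)" using t by simp
      also have "(u - 2*\<tau>/r)^2 / (2*\<tau>) = u^2 / (2*\<tau>) - 2 * u / r + 2*\<tau>/r^2"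
        using t r by (simp add: power2_eq_square field_simps)
      finally show ?thesis by simp
    qed
    moreover have "2 * norm (y - x0) / r \<le> 2 * u / r + 2 * norm (a - x0) / r"
      using su r by (simp add: divide_right_mono add_divide_distrib[symmetric])
    moreover note lowA[OF v]
    moreover have "q y = u^2 / (2*\<tau>)" unfolding q_def u_def ..
    ultimately show ?thesis unfolding K_def by linarith
  qed
  define S where "S = {v + q y | y v. \<phi> y = ereal v}"
  have "m + q x0 \<in> S" using m unfolding S_def by blast
  then have Sne: "S \<noteq> {}" by auto
  have Sbdd: "bdd_below S" unfolding S_def bdd_below_def
    using lowB by blast
  define i where "i = Inf S"
  have ilow: "i \<le> v + q y" if "\<phi> y = ereal v" for y v
    unfolding i_def using Sbdd that by (intro cInf_lower) (auto simp: S_def)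
  have "\<exists>y v. \<phi> y = ereal v \<and> v + q y < i + 1 / Suc n" for n
  proof -
    have "Inf S < i + 1 / Suc n" unfolding i_def by simp
    from cInf_lessD[OF Sne this] show ?thesis unfolding S_def by blast
  qed
  then obtain ys vs where ys: "\<And>n. \<phi> (ys n) = ereal (vs n)" "\<And>n. vs n + q (ys n) < i + 1 / Suc n"
    by metis
  have midest: "(norm (y - z))\<^sup>2 / (8*\<tau>) \<le> ((v + q y) + (w + q z))/2 - i"
    if yz: "\<phi> y = ereal v" "\<phi> z = ereal w" for y z v w
  proof -
    obtain c where c: "\<phi> ((1/2) *\<^sub>R y + (1/2) *\<^sub>R z) = ereal c"
      "c + q ((1/2) *\<^sub>R y + (1/2) *\<^sub>R z) \<le> ((v + q y) + (w + q z))/2 - (norm (y - z))\<^sup>2 / (8*\<tau>)"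
      using mid_ineq[OF C ninf yz t, of a] unfolding q_def by blast
    have "i \<le> c + q ((1/2) *\<^sub>R y + (1/2) *\<^sub>R z)" using ilow[OF c(1)] .
    with c(2) show ?thesis by linarith
  qed
  have "Cauchy ys"
  proof (rule metric_CauchyI)
    fix e :: real assume e: "e > 0"
    obtain N :: nat where N: "real N > 8*\<tau>/e^2" using reals_Archimedean2 by blast
    have "dist (ys n) (ys k) < e" if "n \<ge> N" "k \<ge> N" for n k
    proof -
      have "(norm (ys n - ys k))\<^sup>2 / (8*\<tau>) \<le> (1 / Suc n + 1 / Suc k)/2"
      proof -
        define A where "A = 1 / real (Suc n)"
        define B where "B = 1 / real (Suc k)"
        have "vs n + q (ys n) < i + A" "vs k + q (ys k) < i + B" using ys(2) unfolding A_def B_def by auto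
        moreover have "(norm (ys n - ys k))\<^sup>2 / (8*\<tau>) \<le> ((vs n + q (ys n)) + (vs k + q (ys k)))/2 - i"
          by (rule midest[OF ys(1) ys(1)])
        ultimately have "(norm (ys n - ys k))\<^sup>2 / (8*\<tau>) \<le> (A + B)/2" unfolding add_divide_distrib by linarith
        then show ?thesis unfolding A_def B_def .
      qed
      also have "\<dots> \<le> (1 / Suc N + 1 / Suc N)/2"
        using that by (intro divide_right_mono add_mono) (auto simp: field_simps)
      also have "\<dots> = 1 / Suc N" by (simp add: field_simps)
      finally have "(norm (ys n - ys k))\<^sup>2 \<le> 8*\<tau> / Suc N" using t by (simp add: field_simps)
      also have "\<dots> < e^2"
      proof -
        have "8*\<tau> < e^2 * real N" using N e by (simp add: field_simps)
        also have "\<dots> \<le> e^2 * Suc N" by (intro mult_left_mono) auto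
        finally show ?thesis by (simp add: field_simps)
      qed
      finally have "(norm (ys n - ys k))\<^sup>2 < e^2" .
      then show ?thesis using e by (simp add: dist_norm power_less_imp_less_base)
    qed
    then show "\<exists>M. \<forall>m\<ge>M. \<forall>n\<ge>M. dist (ys m) (ys n) < e" by blast
  qed
  then obtain p where p: "ys \<longlonglongrightarrow> p" using Cauchy_convergent_iff convergent_def by blast
  have Fp: "F p \<le> ereal (i + e)" if e: "e > 0" for e
  proof -
    have cl: "closed {x. F x \<le> ereal (i + e)}" using FL unfolding lsc_fun_def by blast
    obtain N :: nat where N: "real N > 1/e" using reals_Archimedean2 by blast
    have "eventually (\<lambda>n. ys n \<in> {x. F x \<le> ereal (i + e)}) sequentially"
      unfolding eventually_sequentially
    proof (intro exI allI impI)
      fix n assume n: "N \<le> n"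
      have "1 / Suc n \<le> 1 / Suc N" using n by (simp add: field_simps)
      also have "\<dots> < e" using N e by (simp add: field_simps)
      finally have "vs n + q (ys n) \<le> i + e" using ys(2)[of n] by linarith
      then show "ys n \<in> {x. F x \<le> ereal (i + e)}"
        unfolding F_def using ys(1)[of n] by simp
    qed
    from Lim_in_closed_set[OF cl this trivial_limit_sequentially p] show ?thesis by simp
  qed
  have "\<phi> p \<noteq> \<infinity>" using Fp[of 1] unfolding F_def by auto
  then obtain vp where vp: "\<phi> p = ereal vp" using ninf[of p] by (cases "\<phi> p") auto
  have Fpi: "vp + q p \<le> i"
  proof (rule field_le_epsilon)
    fix e :: real assume "e > 0"
    then have "F p \<le> ereal (i + e)" by (rule Fp)
    then show "vp + q p \<le> i + e" unfolding F_def using vp by simp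
  qed
  have minp: "F p \<le> F y" for y
  proof (cases "\<phi> y = \<infinity>")
    case True then show ?thesis unfolding F_def by simp
  next
    case False
    then obtain v where v: "\<phi> y = ereal v" using ninf[of y] by (cases "\<phi> y") auto
    have "vp + q p \<le> v + q y" using Fpi ilow[OF v] by linarith
    then show ?thesis unfolding F_def using vp v by simp
  qed
  show ?thesis
  proof (rule ex1I[of _ p])
    show "\<forall>y. \<phi> p + ereal ((norm (a - p))\<^sup>2 / (2*\<tau>)) \<le> \<phi> y + ereal ((norm (a - y))\<^sup>2 / (2*\<tau>))"
      using minp unfolding F_def q_def by blast
  next
    fix p' assume p': "\<forall>y. \<phi> p' + ereal ((norm (a - p'))\<^sup>2 / (2*\<tau>)) \<le> \<phi> y + ereal ((norm (a - y))\<^sup>2 / (2*\<tau>))"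
    hence minp': "F p' \<le> F y" for y unfolding F_def q_def by blast
    have "\<phi> p' \<noteq> \<infinity>"
    proof
      assume "\<phi> p' = \<infinity>"
      then have "F p' = \<infinity>" unfolding F_def by simp
      with minp'[of p] show False unfolding F_def using vp by simp
    qed
    then obtain vp' where vp': "\<phi> p' = ereal vp'" using ninf[of p'] by (cases "\<phi> p'") auto
    have eq: "vp' + q p' = vp + q p"
    proof -
      have "F p' \<le> F p" "F p \<le> F p'" using minp minp' by auto
      then show ?thesis unfolding F_def using vp vp' by simp
    qed
    have "(norm (p' - p))\<^sup>2 / (8*\<tau>) \<le> 0"
      using midest[OF vp' vp] eq Fpi ilow[OF vp] unfolding add_divide_distrib by linarith
    then have "(norm (p' - p))\<^sup>2 \<le> 0" using t by (simp add: divide_le_0_iff)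
    then show "p' = p" by simp
  qed
qed

lemma ereal_convex_restrict:
  fixes h :: "'a::real_vector \<Rightarrow> real"
  assumes V: "convex V"
    and h: "\<And>x y t. x \<in> V \<Longrightarrow> y \<in> V \<Longrightarrow> 0 \<le> t \<Longrightarrow> t \<le> 1 \<Longrightarrow>
       h (t *\<^sub>R x + (1 - t) *\<^sub>R y) \<le> t * h x + (1 - t) * h y"
  shows "ereal_convex (\<lambda>x. if x \<in> V then ereal (h x) else \<infinity>)"
  unfolding ereal_convex_def
proof (intro allI impI, elim conjE)
  fix x y :: 'a and t :: real assume t: "0 \<le> t" "t \<le> 1"
  show "(if t *\<^sub>R x + (1 - t) *\<^sub>R y \<in> V then ereal (h (t *\<^sub>R x + (1 - t) *\<^sub>R y)) else \<infinity>)
        \<le> ereal t * (if x \<in> V then ereal (h x) else \<infinity>) + ereal (1 - t) * (if y \<in> V then ereal (h y) else \<infinity>)"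
  proof (cases "x \<in> V \<and> y \<in> V")
    case True
    then have "t *\<^sub>R x + (1 - t) *\<^sub>R y \<in> V" using V t unfolding convex_def by auto
    then show ?thesis using True h[of x y t] t by simp
  next
    case False
    show ?thesis
    proof (cases "x \<in> V")
      case True
      with False have y: "y \<notin> V" by simp
      show ?thesis
      proof (cases "t = 1")
        case True then show ?thesis by simp
      next
        case False then have "1 - t > 0" using t by simp
        then show ?thesis using y by simp
      qed
    next
      case x: False
      show ?thesis
      proof (cases "t = 0")
        case True then show ?thesis by simp
      next
        case False then have "t > 0" using t by simp
        then show ?thesis using x t
          by (cases "y \<in> V") simp_all
      qed
    qed
  qed
qed

lemma riesz_sub:
  fixes V :: "'a::{real_inner,complete_space} set" and L :: "'a \<Rightarrow> real"
  assumes S: "subspace V" and cl: "closed V"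
    and add: "\<And>x y. x \<in> V \<Longrightarrow> y \<in> V \<Longrightarrow> L (x + y) = L x + L y"
    and sc: "\<And>c x. x \<in> V \<Longrightarrow> L (c *\<^sub>R x) = c * L x"
    and bd: "\<And>x. x \<in> V \<Longrightarrow> \<bar>L x\<bar> \<le> M * norm x" and M: "M \<ge> 0"
  shows "\<exists>z\<in>V. \<forall>w\<in>V. L w = inner z w"
proof -
  define \<phi> where "\<phi> x = (if x \<in> V then ereal (- L x) else \<infinity>)" for x
  have V0: "0 \<in> V" using S by (simp add: subspace_0)
  have lin: "- L (t *\<^sub>R x + (1 - t) *\<^sub>R y) = t * (- L x) + (1 - t) * (- L y)" if "x \<in> V" "y \<in> V" for x y t
    using that add sc S by (simp add: subspace_scale)
  have C: "ereal_convex \<phi>" unfolding \<phi>_def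
    by (rule ereal_convex_restrict[OF subspace_imp_convex[OF S]]) (simp add: lin)
  have P: "proper_fun \<phi>" unfolding proper_fun_def \<phi>_def using V0 by auto
  have lip: "M-lipschitz_on V (\<lambda>x. - L x)"
  proof (rule lipschitz_onI)
    fix x y assume "x \<in> V" "y \<in> V"
    then have "L x - L y = L (x - y)" "x - y \<in> V"
      using add[of "x - y" y] S by (auto simp: subspace_diff)
    then show "dist (- L x) (- L y) \<le> M * dist x y"
      using bd[of "x - y"] by (simp add: dist_norm dist_real_def abs_minus_commute)
  qed (rule M)
  have Lc: "continuous_on V (\<lambda>x. - L x)" by (rule lipschitz_on_continuous_on[OF lip])
  have Lsc: "lsc_fun \<phi>" unfolding lsc_fun_def
  proof
    fix c :: ereal
    show "closed {x. \<phi> x \<le> c}"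
    proof (cases c)
      case (real c0)
      have "{x. \<phi> x \<le> c} = {x \<in> V. - L x \<le> (\<lambda>_. c0) x}" unfolding \<phi>_def real by auto
      also have "closed \<dots>" by (rule continuous_on_closed_Collect_le[OF Lc continuous_on_const cl])
      finally show ?thesis .
    next
      case PInf then show ?thesis by simp
    next
      case MInf
      have "{x. \<phi> x \<le> c} = {}" unfolding \<phi>_def MInf by auto
      then show ?thesis by simp
    qed
  qed
  obtain p where p: "\<forall>y. \<phi> p + ereal ((norm (0 - p))\<^sup>2 / (2*1)) \<le> \<phi> y + ereal ((norm (0 - y))\<^sup>2 / (2*1))"
    using prox_ex1[OF C Lsc P, of 1 0] by auto
  have pV: "p \<in> V"
  proof (rule ccontr)
    assume "p \<notin> V"
    then have "\<phi> p = \<infinity>" unfolding \<phi>_def by simp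
    with p[rule_format, of 0] V0 show False unfolding \<phi>_def by simp
  qed
  have ninf: "\<phi> x \<noteq> -\<infinity>" for x unfolding \<phi>_def by simp
  have vi: "inner (0 - p) (y - p) / 1 \<le> - L y - - L p" if "y \<in> V" for y
    by (rule prox_vi[OF C ninf _ p[rule_format]]) (use pV that in \<open>simp_all add: \<phi>_def\<close>)
  have "L w = inner p w" if w: "w \<in> V" for w
  proof -
    have 1: "p + w \<in> V" "p - w \<in> V" using pV w S by (auto simp: subspace_add subspace_diff)
    have "L (p + w) = L p + L w" using add pV w by simp
    moreover have "L (p - w) = L p - L w"
      using add[of "p - w" w] 1 w by simp
    ultimately show ?thesis using vi[OF 1(1)] vi[OF 1(2)]
      by (simp add: inner_diff_left inner_diff_right inner_add_right)
  qed
  with pV show ?thesis by blast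
qed

lemma proj_sub:
  fixes V :: "'a::{real_inner,complete_space} set"
  assumes S: "subspace V" and cl: "closed V"
  shows "\<exists>q\<in>V. \<forall>w\<in>V. inner (u - q) w = 0"
proof -
  obtain z where z: "z \<in> V" "\<forall>w\<in>V. inner u w = inner z w"
    using riesz_sub[OF S cl, of "\<lambda>w. inner u w" "norm u"]
    by (auto simp: inner_add_right Cauchy_Schwarz_ineq2)
  then show ?thesis by (auto simp: inner_diff_left)
qed

lemma convergent_cmult': "convergent (X :: nat \<Rightarrow> real) \<Longrightarrow> convergent (\<lambda>n. c * X n)"
  unfolding convergent_def using tendsto_mult_left by blast

lemma weak_compact:
  fixes x :: "nat \<Rightarrow> 'a::{real_inner,complete_space}"
  assumes bd: "\<And>n. norm (x n) \<le> M"
  shows "\<exists>\<sigma> z. strict_mono \<sigma> \<and> weakly_converges (\<lambda>k. x (\<sigma> k)) z"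
proof -
  have M: "M \<ge> 0" using bd[of 0] norm_ge_zero[of "x 0"] by linarith
  have ibd: "\<bar>inner (x n) u\<bar> \<le> M * norm u" for n u
    using Cauchy_Schwarz_ineq2[of "x n" u] bd[of n] by (meson mult_right_mono norm_ge_zero order_trans)
  interpret DS: subseqs "\<lambda>m s. convergent (\<lambda>k. inner (x (s k)) (x m))"
  proof
    fix m and s :: "nat \<Rightarrow> nat" assume s: "strict_mono s"
    define X where "X k = inner (x (s k)) (x m)" for k
    obtain r where r: "strict_mono r" "monoseq (\<lambda>k. X (r k))" using seq_monosub by blast
    have "Bseq (\<lambda>k. X (r k))"
      unfolding X_def using ibd by (intro BseqI'[of _ "M * norm (x m)"]) auto
    then have "convergent (\<lambda>k. X (r k))" using r(2) by (rule Bseq_monoseq_convergent)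
    then show "\<exists>r'. strict_mono r' \<and> convergent (\<lambda>k. inner (x ((s \<circ> r') k)) (x m))"
      using r(1) unfolding X_def by (intro exI[of _ r]) auto
  qed
  define \<sigma> where "\<sigma> = DS.diagseq"
  have \<sigma>: "strict_mono \<sigma>" unfolding \<sigma>_def by (rule DS.subseq_diagseq)
  define y where "y k = x (\<sigma> k)" for k
  have yb: "norm (y k) \<le> M" for k unfolding y_def by (rule bd)
  have ybi: "\<bar>inner (y k) u\<bar> \<le> M * norm u" for k u unfolding y_def by (rule ibd)
  have conv_x: "convergent (\<lambda>k. inner (y k) (x m))" for m
  proof -
    have "convergent (\<lambda>k. inner (x ((DS.diagseq \<circ> (+) (Suc m)) k)) (x m))"
    proof (rule DS.diagseq_holds)
      fix r s :: "nat \<Rightarrow> nat" and n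
      assume "strict_mono r" "convergent (\<lambda>k. inner (x (s k)) (x n))"
      from convergent_subseq_convergent[OF this(2) this(1)]
      show "convergent (\<lambda>k. inner (x ((s \<circ> r) k)) (x n))" by (simp add: o_def)
    qed
    then have "convergent (\<lambda>k. inner (y (k + Suc m)) (x m))"
      unfolding y_def \<sigma>_def by (simp add: o_def add.commute)
    then show ?thesis by (rule iffD1[OF convergent_ignore_initial_segment])
  qed
  define W where "W = {v. convergent (\<lambda>k. inner (y k) v)}"
  have SW: "subspace W" unfolding subspace_def W_def
    by (auto simp: inner_add_right convergent_const intro: convergent_add convergent_cmult')
  have CW: "closed W" unfolding closed_sequential_limits
  proof (intro allI impI, elim conjE)
    fix vs v assume vs: "\<forall>n. vs n \<in> W" and lim: "vs \<longlonglongrightarrow> v"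
    have "Cauchy (\<lambda>k. inner (y k) v)"
    proof (rule metric_CauchyI)
      fix e :: real assume e: "e > 0"
      have "e / (4 * (M + 1)) > 0" using e M by simp
      then obtain n where n: "norm (vs n - v) < e / (4 * (M + 1))"
        using lim unfolding LIMSEQ_iff by blast
      have "Cauchy (\<lambda>k. inner (y k) (vs n))" using vs unfolding W_def
        by (simp add: Cauchy_convergent_iff)
      then obtain N where N: "\<forall>k\<ge>N. \<forall>l\<ge>N. dist (inner (y k) (vs n)) (inner (y l) (vs n)) < e/2"
        using metric_CauchyD[of _ "e/2"] e by (meson half_gt_zero)
      have small: "\<bar>inner (y k) (v - vs n)\<bar> < e/4" for k
      proof -
        have "\<bar>inner (y k) (v - vs n)\<bar> \<le> M * norm (v - vs n)" by (rule ybi)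
        also have "\<dots> \<le> M * (e / (4 * (M + 1)))"
          using n M by (intro mult_left_mono) (auto simp: norm_minus_commute)
        also have "\<dots> < e/4" using M e by (simp add: field_simps)
        finally show ?thesis .
      qed
      have "dist (inner (y k) v) (inner (y l) v) < e" if "k \<ge> N" "l \<ge> N" for k l
      proof -
        have eq: "inner (y k) v - inner (y l) v = (inner (y k) (vs n) - inner (y l) (vs n))
                    + inner (y k) (v - vs n) - inner (y l) (v - vs n)"
          by (simp add: inner_diff_right)
        have h: "\<bar>inner (y k) (vs n) - inner (y l) (vs n)\<bar> < e/2"
          using N that by (simp add: dist_real_def)
        show ?thesis unfolding dist_real_def eq using small[of k] small[of l] h
          by (simp only: abs_less_iff) linarith
      qed
      then show "\<exists>N. \<forall>k\<ge>N. \<forall>l\<ge>N. dist (inner (y k) v) (inner (y l) v) < e" by blast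
    qed
    then show "v \<in> W" unfolding W_def by (simp add: Cauchy_convergent_iff)
  qed
  have yW: "y k \<in> W" for k
  proof -
    have "x (\<sigma> k) \<in> W" unfolding W_def using conv_x by simp
    then show ?thesis unfolding y_def .
  qed
  have allconv: "convergent (\<lambda>k. inner (y k) u)" for u
  proof -
    obtain q where q: "q \<in> W" "\<forall>w\<in>W. inner (u - q) w = 0" using proj_sub[OF SW CW] by blast
    have "inner (y k) u = inner (y k) q" for k
    proof -
      have "inner (u - q) (y k) = 0" using q(2) yW[of k] by blast
      then have "inner u (y k) = inner q (y k)" by (simp add: inner_diff_left)
      then show ?thesis by (simp add: inner_commute)
    qed
    then show ?thesis using q(1) unfolding W_def by simp
  qed
  define L where "L u = lim (\<lambda>k. inner (y k) u)" for u
  have Lt: "(\<lambda>k. inner (y k) u) \<longlonglongrightarrow> L u" for u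
    unfolding L_def using allconv convergent_LIMSEQ_iff by blast
  have Ladd: "L (u + w) = L u + L w" for u w
    using Lt[of "u + w"] tendsto_add[OF Lt[of u] Lt[of w]]
    by (simp add: inner_add_right LIMSEQ_unique)
  have Lsc: "L (c *\<^sub>R u) = c * L u" for c u
    using Lt[of "c *\<^sub>R u"] tendsto_mult_left[OF Lt[of u], of c]
    by (simp add: LIMSEQ_unique)
  have Lbd: "\<bar>L u\<bar> \<le> M * norm u" for u
    using tendsto_rabs[OF Lt[of u]] ybi by (intro LIMSEQ_le_const2) auto
  obtain z where z: "\<forall>w\<in>UNIV. L w = inner z w"
    using riesz_sub[of UNIV L M] Ladd Lsc Lbd M by auto
  have "weakly_converges y z" unfolding weakly_converges_def
    using Lt z by simp
  then show ?thesis using \<sigma> unfolding y_def by blast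
qed

lemma norm_diff_sq_expand:
  fixes u z w :: "'a::real_inner"
  shows "(norm (u - w))\<^sup>2 = (norm (u - z))\<^sup>2 + 2 * inner (u - z) (z - w) + (norm (z - w))\<^sup>2"
proof -
  have "u - w = (u - z) + (z - w)" by simp
  then show ?thesis
    by (metis power2_norm_eq_inner inner_add_left inner_add_right inner_commute mult_2 add.assoc add.commute)
qed

lemma opial:
  fixes T :: "'a::{real_inner,complete_space} \<Rightarrow> 'a"
  assumes ne: "\<And>x y. norm (T x - T y) \<le> norm (x - y)"
    and p0: "T p0 = p0"
    and av: "\<And>x p. T p = p \<Longrightarrow> (norm (T x - p))\<^sup>2 \<le> (norm (x - p))\<^sup>2 - c * (norm (x - T x))\<^sup>2"
    and c: "c > 0"
  shows "\<exists>z. T z = z \<and> weakly_converges (\<lambda>n. (T ^^ n) x0) z"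
proof -
  define xs where "xs n = (T ^^ n) x0" for n
  have xsS: "xs (Suc n) = T (xs n)" for n unfolding xs_def by simp
  have fej: "norm (xs (Suc n) - p) \<le> norm (xs n - p)" if "T p = p" for p n
    using ne[of "xs n" p] that by (simp add: xsS)
  have fejN: "norm (xs n - p) \<le> norm (x0 - p)" if "T p = p" for p n
  proof (induction n)
    case 0 then show ?case by (simp add: xs_def)
  next
    case (Suc n) then show ?case using fej[OF that, of n] by linarith
  qed
  have dconv: "convergent (\<lambda>n. norm (xs n - p))" if "T p = p" for p
  proof (rule Bseq_monoseq_convergent)
    show "Bseq (\<lambda>n. norm (xs n - p))" using fejN[OF that] by (intro BseqI'[of _ "norm (x0 - p)"]) auto
    show "monoseq (\<lambda>n. norm (xs n - p))"
      by (rule decseq_imp_monoseq, rule decseq_SucI, rule fej[OF that])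
  qed
  have sqconv: "(\<lambda>n. (norm (xs n - p))\<^sup>2) \<longlonglongrightarrow> (lim (\<lambda>n. norm (xs n - p)))\<^sup>2" if "T p = p" for p
    using dconv[OF that] by (intro tendsto_power) (simp add: convergent_LIMSEQ_iff)
  define d where "d n = norm (xs n - T (xs n))" for n
  have d0: "d \<longlonglongrightarrow> 0"
  proof -
    define A where "A = (lim (\<lambda>n. norm (xs n - p0)))\<^sup>2"
    have a: "(\<lambda>n. (norm (xs n - p0))\<^sup>2) \<longlonglongrightarrow> A" unfolding A_def by (rule sqconv[OF p0])
    have a': "(\<lambda>n. (norm (xs (Suc n) - p0))\<^sup>2) \<longlonglongrightarrow> A"
      using LIMSEQ_Suc[OF a] .
    have "(\<lambda>n. ((norm (xs n - p0))\<^sup>2 - (norm (xs (Suc n) - p0))\<^sup>2) / c) \<longlonglongrightarrow> (A - A) / c"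
      by (intro tendsto_divide tendsto_diff a a') (use c in auto)
    then have t: "(\<lambda>n. ((norm (xs n - p0))\<^sup>2 - (norm (xs (Suc n) - p0))\<^sup>2) / c) \<longlonglongrightarrow> 0" by simp
    have "(\<lambda>n. (d n)\<^sup>2) \<longlonglongrightarrow> 0"
    proof (rule tendsto_sandwich[OF _ _ tendsto_const t])
      show "\<forall>\<^sub>F n in sequentially. 0 \<le> (d n)\<^sup>2" by simp
      show "\<forall>\<^sub>F n in sequentially. (d n)\<^sup>2 \<le> ((norm (xs n - p0))\<^sup>2 - (norm (xs (Suc n) - p0))\<^sup>2) / c"
      proof (rule always_eventually, rule allI)
        fix n
        have "c * (d n)\<^sup>2 \<le> (norm (xs n - p0))\<^sup>2 - (norm (xs (Suc n) - p0))\<^sup>2"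
          using av[OF p0, of "xs n"] unfolding d_def xsS by linarith
        then show "(d n)\<^sup>2 \<le> ((norm (xs n - p0))\<^sup>2 - (norm (xs (Suc n) - p0))\<^sup>2) / c"
          using c by (simp add: field_simps)
      qed
    qed
    then have "(\<lambda>n. sqrt ((d n)\<^sup>2)) \<longlonglongrightarrow> sqrt 0" by (rule tendsto_real_sqrt)
    moreover have "sqrt ((d n)\<^sup>2) = d n" for n unfolding d_def by simp
    ultimately show ?thesis by simp
  qed
  define R where "R = norm (x0 - p0) + norm p0"
  have xsb: "norm (xs n) \<le> R" for n
  proof -
    have "norm (xs n) \<le> norm (xs n - p0) + norm p0" using norm_triangle_ineq[of "xs n - p0" p0] by simp
    then show ?thesis using fejN[OF p0, of n] unfolding R_def by linarith
  qed
  have demi: "T z = z" if \<sigma>: "strict_mono \<sigma>" and wz: "weakly_converges (\<lambda>k. xs (\<sigma> k)) z" for \<sigma> z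
  proof -
    define u where "u k = xs (\<sigma> k)" for k
    define B where "B = R + norm z"
    have ub: "norm (u k - z) \<le> B" for k
      using norm_triangle_ineq4[of "u k" z] xsb[of "\<sigma> k"] unfolding u_def B_def by linarith
    have du: "(\<lambda>k. d (\<sigma> k)) \<longlonglongrightarrow> 0" using LIMSEQ_subseq_LIMSEQ[OF d0 \<sigma>] by (simp add: o_def)
    have key: "(norm (z - T z))\<^sup>2 + 2 * inner (u k - z) (z - T z) \<le> (d (\<sigma> k))\<^sup>2 + 2 * d (\<sigma> k) * B" for k
    proof -
      have "norm (u k - T z) \<le> norm (u k - T (u k)) + norm (T (u k) - T z)"
        using norm_diff_triangle_ineq[of "u k" "T (u k)" "T (u k)" "T z"] by simp
      also have "\<dots> \<le> d (\<sigma> k) + norm (u k - z)" using ne[of "u k" z] unfolding d_def u_def by simp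
      finally have 1: "norm (u k - T z) \<le> d (\<sigma> k) + norm (u k - z)" .
      have "(norm (u k - T z))\<^sup>2 \<le> (d (\<sigma> k) + norm (u k - z))\<^sup>2"
        using 1 by (intro power_mono) auto
      also have "\<dots> = (d (\<sigma> k))\<^sup>2 + 2 * d (\<sigma> k) * norm (u k - z) + (norm (u k - z))\<^sup>2"
        by (simp add: power2_eq_square algebra_simps)
      also have "\<dots> \<le> (d (\<sigma> k))\<^sup>2 + 2 * d (\<sigma> k) * B + (norm (u k - z))\<^sup>2"
        using ub[of k] by (simp add: d_def mult_left_mono)
      finally have 2: "(norm (u k - T z))\<^sup>2 \<le> (d (\<sigma> k))\<^sup>2 + 2 * d (\<sigma> k) * B + (norm (u k - z))\<^sup>2" .
      have 3: "(norm (u k - T z))\<^sup>2 = (norm (u k - z))\<^sup>2 + 2 * inner (u k - z) (z - T z) + (norm (z - T z))\<^sup>2"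
        by (rule norm_diff_sq_expand)
      from 2 3 show ?thesis by linarith
    qed
    have l1: "(\<lambda>k. (norm (z - T z))\<^sup>2 + 2 * inner (u k - z) (z - T z)) \<longlonglongrightarrow> (norm (z - T z))\<^sup>2 + 2 * 0"
    proof (intro tendsto_add tendsto_const tendsto_mult)
      have "(\<lambda>k. inner (u k) (z - T z)) \<longlonglongrightarrow> inner z (z - T z)"
        using wz unfolding weakly_converges_def u_def by blast
      then have "(\<lambda>k. inner (u k) (z - T z) - inner z (z - T z)) \<longlonglongrightarrow> inner z (z - T z) - inner z (z - T z)"
        by (intro tendsto_diff tendsto_const)
      then show "(\<lambda>k. inner (u k - z) (z - T z)) \<longlonglongrightarrow> 0" by (simp add: inner_diff_left)
    qed
    have l2: "(\<lambda>k. (d (\<sigma> k))\<^sup>2 + 2 * d (\<sigma> k) * B) \<longlonglongrightarrow> 0\<^sup>2 + 2 * 0 * B"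
      by (intro tendsto_add tendsto_mult tendsto_power tendsto_const du)
    have "(norm (z - T z))\<^sup>2 + 2 * 0 \<le> 0\<^sup>2 + 2 * 0 * B"
      using key by (intro LIMSEQ_le[OF l1 l2]) auto
    then have "(norm (z - T z))\<^sup>2 \<le> 0" by simp
    then show ?thesis by simp
  qed
  have uniq: "z1 = z2" if s1: "strict_mono \<sigma>1" "weakly_converges (\<lambda>k. xs (\<sigma>1 k)) z1"
     and s2: "strict_mono \<sigma>2" "weakly_converges (\<lambda>k. xs (\<sigma>2 k)) z2" for \<sigma>1 \<sigma>2 z1 z2
  proof -
    have f1: "T z1 = z1" by (rule demi[OF s1])
    have f2: "T z2 = z2" by (rule demi[OF s2])
    define g where "g n = inner (xs n) (z1 - z2)" for n
    have geq: "g n = ((norm (xs n - z2))\<^sup>2 - (norm (xs n - z1))\<^sup>2 + (norm z1)\<^sup>2 - (norm z2)\<^sup>2) / 2" for n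
      unfolding g_def power2_norm_eq_inner
      by (simp add: inner_diff_left inner_diff_right inner_commute field_simps)
    obtain lv where gl: "g \<longlonglongrightarrow> lv"
    proof -
      have "(\<lambda>n. ((norm (xs n - z2))\<^sup>2 - (norm (xs n - z1))\<^sup>2 + (norm z1)\<^sup>2 - (norm z2)\<^sup>2) / 2) \<longlonglongrightarrow>
         (((lim (\<lambda>n. norm (xs n - z2)))\<^sup>2 - (lim (\<lambda>n. norm (xs n - z1)))\<^sup>2 + (norm z1)\<^sup>2 - (norm z2)\<^sup>2) / 2)"
        by (intro tendsto_divide tendsto_add tendsto_diff tendsto_const sqconv f1 f2) simp
      then show ?thesis using that unfolding geq[symmetric] by blast
    qed
    have "(\<lambda>k. g (\<sigma>1 k)) \<longlonglongrightarrow> lv" using LIMSEQ_subseq_LIMSEQ[OF gl s1(1)] by (simp add: o_def)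
    moreover have "(\<lambda>k. g (\<sigma>1 k)) \<longlonglongrightarrow> inner z1 (z1 - z2)"
      using s1(2) unfolding weakly_converges_def g_def by blast
    ultimately have e1: "lv = inner z1 (z1 - z2)" by (rule LIMSEQ_unique)
    have "(\<lambda>k. g (\<sigma>2 k)) \<longlonglongrightarrow> lv" using LIMSEQ_subseq_LIMSEQ[OF gl s2(1)] by (simp add: o_def)
    moreover have "(\<lambda>k. g (\<sigma>2 k)) \<longlonglongrightarrow> inner z2 (z1 - z2)"
      using s2(2) unfolding weakly_converges_def g_def by blast
    ultimately have e2: "lv = inner z2 (z1 - z2)" by (rule LIMSEQ_unique)
    have "inner (z1 - z2) (z1 - z2) = 0" using e1 e2 by (simp add: inner_diff_left)
    then show ?thesis by simp
  qed
  obtain \<sigma> z where \<sigma>: "strict_mono \<sigma>" "weakly_converges (\<lambda>k. xs (\<sigma> k)) z"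
    using weak_compact[of xs R, OF xsb] by blast
  have Tz: "T z = z" by (rule demi[OF \<sigma>])
  have "weakly_converges xs z" unfolding weakly_converges_def
  proof (rule allI, rule ccontr)
    fix w assume nc: "\<not> (\<lambda>n. inner (xs n) w) \<longlonglongrightarrow> inner z w"
    then obtain e where e: "e > 0" "\<forall>N. \<exists>n\<ge>N. \<not> norm (inner (xs n) w - inner z w) < e"
      unfolding LIMSEQ_iff by blast
    define S where "S = {n. e \<le> \<bar>inner (xs n) w - inner z w\<bar>}"
    have "infinite S" unfolding infinite_nat_iff_unbounded_le
    proof
      fix m
      from e(2) obtain n where "n \<ge> m" "\<not> norm (inner (xs n) w - inner z w) < e" by blast
      then show "\<exists>n\<ge>m. n \<in> S" unfolding S_def by auto
    qed
    then obtain \<rho> :: "nat \<Rightarrow> nat" where \<rho>: "strict_mono \<rho>" "\<forall>n. \<rho> n \<in> S" using infinite_enumerate by blast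
    obtain \<sigma>' z' where \<sigma>': "strict_mono \<sigma>'" "weakly_converges (\<lambda>k. xs (\<rho> (\<sigma>' k))) z'"
      using weak_compact[of "\<lambda>n. xs (\<rho> n)" R] xsb by blast
    have sm: "strict_mono (\<rho> \<circ> \<sigma>')" using \<rho>(1) \<sigma>'(1) by (rule strict_mono_o)
    have "weakly_converges (\<lambda>k. xs ((\<rho> \<circ> \<sigma>') k)) z'" using \<sigma>'(2) by (simp add: o_def)
    from uniq[OF sm this \<sigma>] have "z' = z" .
    then have "(\<lambda>k. inner (xs (\<rho> (\<sigma>' k))) w) \<longlonglongrightarrow> inner z w"
      using \<sigma>'(2) unfolding weakly_converges_def by blast
    then obtain k where "norm (inner (xs (\<rho> (\<sigma>' k))) w - inner z w) < e"
      using e(1) unfolding LIMSEQ_iff by blast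
    moreover have "\<rho> (\<sigma>' k) \<in> S" using \<rho>(2) by blast
    ultimately show False unfolding S_def by simp
  qed
  then show ?thesis using Tz unfolding xs_def by blast
qed

lemma quad_identity:
  fixes u y :: "'a::real_inner"
  assumes g: "\<gamma> > 0" and c: "c = 1 - \<gamma>*\<omega>" "c > 0"
  shows "(norm (u - y))\<^sup>2 / (2*\<gamma>) = \<omega>/2 * (norm y)\<^sup>2 + (norm ((1/c) *\<^sub>R u - y))\<^sup>2 / (2*(\<gamma>/c))
          + ((norm u)\<^sup>2 / (2*\<gamma>) - (norm u)\<^sup>2 / (2*\<gamma>*c))"
proof -
  have e1: "(norm (u - y))\<^sup>2 = (norm u)\<^sup>2 - 2 * inner u y + (norm y)\<^sup>2"
    unfolding power2_norm_eq_inner by (simp add: inner_diff_left inner_diff_right inner_commute)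
  have e2: "(norm ((1/c) *\<^sub>R u - y))\<^sup>2 = (norm u)\<^sup>2 / c^2 - 2 * inner u y / c + (norm y)\<^sup>2"
    unfolding power2_norm_eq_inner by (simp add: inner_diff_left inner_diff_right inner_commute power2_eq_square)
  have w: "\<omega> = (1 - c) / \<gamma>" using g c by (simp add: field_simps)
  show ?thesis unfolding e1 e2 w using g c
    by (simp add: field_simps power2_eq_square)
qed

lemma prox_shift:
  fixes g :: "'a::{real_inner,complete_space} \<Rightarrow> ereal"
  assumes g: "\<gamma> > 0" and c: "c = 1 - \<gamma>*\<omega>" "c > 0"
    and gh: "\<And>x. gh x = g x + ereal (\<omega>/2 * (norm x)\<^sup>2)"
  shows "(g p + ereal ((norm (u - p))\<^sup>2 / (2*\<gamma>)) \<le> g y + ereal ((norm (u - y))\<^sup>2 / (2*\<gamma>)))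
     \<longleftrightarrow> (gh p + ereal ((norm ((1/c) *\<^sub>R u - p))\<^sup>2 / (2*(\<gamma>/c))) \<le> gh y + ereal ((norm ((1/c) *\<^sub>R u - y))\<^sup>2 / (2*(\<gamma>/c))))"
proof -
  define K where "K = (norm u)\<^sup>2 / (2*\<gamma>) - (norm u)\<^sup>2 / (2*\<gamma>*c)"
  have eq: "g z + ereal ((norm (u - z))\<^sup>2 / (2*\<gamma>)) = (gh z + ereal ((norm ((1/c) *\<^sub>R u - z))\<^sup>2 / (2*(\<gamma>/c)))) + ereal K" for z
    unfolding gh quad_identity[OF g c, of u z] K_def by (simp add: add.assoc)
  show ?thesis unfolding eq by (simp add: ereal_add_le_add_iff2)
qed

lemma norm_add_sq_le: "(norm (u + w))\<^sup>2 \<le> 2 * (norm u)\<^sup>2 + 2 * (norm (w::'a::real_inner))\<^sup>2"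
proof -
  have "(norm (u + w))\<^sup>2 + (norm (u - w))\<^sup>2 = 2 * (norm u)\<^sup>2 + 2 * (norm w)\<^sup>2"
    unfolding power2_norm_eq_inner by (simp add: inner_add_left inner_add_right inner_diff_left inner_diff_right inner_commute)
  moreover have "(norm (u - w))\<^sup>2 \<ge> 0" by simp
  ultimately show ?thesis by linarith
qed

theorem mainTheorem16:
  fixes f :: "'a::{real_inner, complete_space} \<Rightarrow> real"
    and gradf :: "'a \<Rightarrow> 'a"
    and g :: "'a \<Rightarrow> ereal"
    and \<mu> \<omega> \<beta> \<gamma> :: real
    and x0 :: 'a
  assumes "\<mu> \<ge> \<omega>" and "\<omega> \<ge> 0" and "\<beta> > 0"
    and "strongly_convex \<mu> f"
    and "\<And>x. (f has_derivative (\<lambda>h. inner (gradf x) h)) (at x)"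
    and "\<beta>-lipschitz_on UNIV gradf"
    and "proper_fun g" and "lsc_fun g" and "hypoconvex \<omega> g"
    and "argmin_sum f g \<noteq> {}"
    and "0 < \<gamma>" and "\<gamma> < 2 / (\<beta> + 2 * \<mu>)"
  shows "let \<delta> = (1 - \<gamma> * \<mu>) / (1 - \<gamma> * \<omega>);
             T = (\<lambda>x. prox \<gamma> g (x - \<gamma> *\<^sub>R gradf x))
         in fixpoints T = argmin_sum f g \<and>
            (\<exists>xbar \<in> argmin_sum f g.
               weakly_converges (\<lambda>n. (T ^^ n) x0) xbar \<and>
               (\<mu> > \<omega> \<longrightarrow>
                  argmin_sum f g = {xbar} \<and>
                  (\<lambda>n. (T ^^ n) x0) \<longlonglongrightarrow> xbar \<and>
                  \<delta> < 1 \<and>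
                  (\<forall>n. norm ((T ^^ n) x0 - xbar) \<le> \<delta> ^ n * norm (x0 - xbar))))"
proof -
  note mw = assms(1) and w0 = assms(2) and b0 = assms(3) and SC = assms(4) and D = assms(5)
    and Lip = assms(6) and gP = assms(7) and gL = assms(8) and gH = assms(9) and ne = assms(10)
    and g0 = assms(11) and gb = assms(12)
  have m0: "\<mu> \<ge> 0" using mw w0 by linarith
  have gbm: "\<gamma> * (\<beta> + 2 * \<mu>) < 2" using gb b0 m0 g0 by (simp add: field_simps)
  have gm: "\<gamma> * \<mu> < 1"
  proof -
    have "\<gamma>*\<beta> + 2*(\<gamma>*\<mu>) < 2" using gbm by (simp add: algebra_simps)
    moreover have "\<gamma>*\<beta> > 0" using g0 b0 by simp
    ultimately show ?thesis by linarith
  qed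
  have gw: "\<gamma> * \<omega> \<le> \<gamma> * \<mu>" using mw g0 by simp
  define c where "c = 1 - \<gamma> * \<omega>"
  have c0: "c > 0" using gm gw unfolding c_def by linarith
  define \<tau> where "\<tau> = \<gamma> / c"
  have t0: "\<tau> > 0" unfolding \<tau>_def using g0 c0 by simp
  define gh where "gh x = g x + ereal (\<omega>/2 * (norm x)\<^sup>2)" for x
  define \<delta> where "\<delta> = (1 - \<gamma> * \<mu>) / c"
  have d0: "\<delta> > 0" "\<delta> \<le> 1" unfolding \<delta>_def using gm gw c0 by (auto simp: field_simps c_def)
  define s where "s = \<gamma> / (1 - \<gamma> * \<mu>)"
  have s0: "s > 0" unfolding s_def using g0 gm by simp
  define H where "H x = gradf x - \<mu> *\<^sub>R x" for x
  define T where "T x = prox \<gamma> g (x - \<gamma> *\<^sub>R gradf x)" for x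
  define v where "v x = (1/c) *\<^sub>R (x - \<gamma> *\<^sub>R gradf x)" for x
  define Pm where "Pm w p \<longleftrightarrow> (\<forall>y. gh p + ereal ((norm (w - p))\<^sup>2 / (2*\<tau>)) \<le> gh y + ereal ((norm (w - y))\<^sup>2 / (2*\<tau>)))" for w p
  have gN: "g x \<noteq> -\<infinity>" for x using gP unfolding proper_fun_def by blast
  have ghN: "gh x \<noteq> -\<infinity>" for x unfolding gh_def using gN[of x] by simp
  have ghC: "ereal_convex gh" using gH unfolding hypoconvex_def gh_def by simp
  have ghL: "lsc_fun gh" unfolding gh_def
    by (rule lsc_add[OF gL gN]) (intro continuous_intros)
  have ghP: "proper_fun gh"
  proof -
    obtain x1 where "g x1 \<noteq> \<infinity>" using gP unfolding proper_fun_def by blast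
    then have "gh x1 \<noteq> \<infinity>" unfolding gh_def by simp
    then show ?thesis unfolding proper_fun_def using ghN by blast
  qed
  have P1: "\<exists>!p. Pm w p" for w unfolding Pm_def by (rule prox_ex1[OF ghC ghL ghP t0])
  have P2: "prox \<gamma> g u = p \<longleftrightarrow> Pm ((1/c) *\<^sub>R u) p" for u p
  proof -
    have eqv: "(\<forall>y. g q + ereal ((norm (u - q))\<^sup>2 / (2*\<gamma>)) \<le> g y + ereal ((norm (u - y))\<^sup>2 / (2*\<gamma>)))
       \<longleftrightarrow> Pm ((1/c) *\<^sub>R u) q" for q
    proof -
      have "(g q + ereal ((norm (u - q))\<^sup>2 / (2*\<gamma>)) \<le> g y + ereal ((norm (u - y))\<^sup>2 / (2*\<gamma>)))
        \<longleftrightarrow> (gh q + ereal ((norm ((1/c) *\<^sub>R u - q))\<^sup>2 / (2*\<tau>)) \<le> gh y + ereal ((norm ((1/c) *\<^sub>R u - y))\<^sup>2 / (2*\<tau>)))" for y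
        unfolding \<tau>_def by (rule prox_shift[OF g0 c_def c0]) (simp add: gh_def)
      then show ?thesis unfolding Pm_def by blast
    qed
    have pe: "prox \<gamma> g u = (THE q. Pm ((1/c) *\<^sub>R u) q)" unfolding prox_def eqv ..
    show ?thesis
    proof
      assume "prox \<gamma> g u = p"
      then show "Pm ((1/c) *\<^sub>R u) p" using theI'[OF P1[of "(1/c) *\<^sub>R u"]] pe by simp
    next
      assume "Pm ((1/c) *\<^sub>R u) p"
      from the1_equality[OF P1 this] show "prox \<gamma> g u = p" using pe by simp
    qed
  qed
  have TP: "T x = p \<longleftrightarrow> Pm (v x) p" for x p unfolding T_def v_def by (rule P2)
  have TPm: "Pm (v x) (T x)" for x using TP by blast
  obtain x1 where x1: "gh x1 \<noteq> \<infinity>" using ghP unfolding proper_fun_def by blast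
  have P3: "\<exists>a. gh p = ereal a" if "Pm w p" for w p
  proof -
    have "gh p + ereal ((norm (w - p))\<^sup>2 / (2*\<tau>)) \<le> gh x1 + ereal ((norm (w - x1))\<^sup>2 / (2*\<tau>))"
      using that unfolding Pm_def by blast
    moreover have "gh x1 + ereal ((norm (w - x1))\<^sup>2 / (2*\<tau>)) \<noteq> \<infinity>" using x1 ghN[of x1] by simp
    ultimately have "gh p \<noteq> \<infinity>" by auto
    then show ?thesis using ghN[of p] by (cases "gh p") auto
  qed
  have P4: "(norm (p - q))\<^sup>2 \<le> inner (a - b) (p - q)" if pa: "Pm a p" and qb: "Pm b q" for a b p q
  proof -
    obtain ap where ap: "gh p = ereal ap" using P3[OF pa] by blast
    obtain aq where aq: "gh q = ereal aq" using P3[OF qb] by blast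
    have m1: "\<And>y. gh p + ereal ((norm (a - p))\<^sup>2 / (2*\<tau>)) \<le> gh y + ereal ((norm (a - y))\<^sup>2 / (2*\<tau>))"
      using pa unfolding Pm_def by blast
    have m2: "\<And>y. gh q + ereal ((norm (b - q))\<^sup>2 / (2*\<tau>)) \<le> gh y + ereal ((norm (b - y))\<^sup>2 / (2*\<tau>))"
      using qb unfolding Pm_def by blast
    have v1: "inner (a - p) (q - p) / \<tau> \<le> aq - ap" by (rule prox_vi[OF ghC ghN t0 m1 ap aq])
    have v2: "inner (b - q) (p - q) / \<tau> \<le> ap - aq" by (rule prox_vi[OF ghC ghN t0 m2 aq ap])
    have "inner (a - p) (q - p) / \<tau> + inner (b - q) (p - q) / \<tau> \<le> 0" using v1 v2 by linarith
    then have "inner (a - p) (q - p) + inner (b - q) (p - q) \<le> 0"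
      using t0 by (simp add: add_divide_distrib[symmetric] divide_le_0_iff)
    moreover have "inner (a - p) (q - p) + inner (b - q) (p - q) = (norm (p - q))\<^sup>2 - inner (a - b) (p - q)"
      unfolding power2_norm_eq_inner by (simp add: inner_diff_left inner_diff_right inner_commute)
    ultimately show ?thesis by linarith
  qed
  define A where "A x = x - s *\<^sub>R H x" for x
  have vA: "v x = \<delta> *\<^sub>R A x" for x
  proof -
    have 1: "\<delta> * s = \<gamma> / c" unfolding \<delta>_def s_def using gm c0 by (simp add: field_simps)
    have 2: "\<delta> + \<gamma> / c * \<mu> = 1 / c" unfolding \<delta>_def s_def using gm c0 by (simp add: field_simps)
    have "\<delta> *\<^sub>R A x = (\<delta> + \<delta> * s * \<mu>) *\<^sub>R x - (\<delta> * s) *\<^sub>R gradf x"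
      unfolding A_def H_def by (simp add: algebra_simps)
    also have "\<dots> = (1/c) *\<^sub>R x - (\<gamma> / c) *\<^sub>R gradf x" unfolding 1 2 ..
    also have "\<dots> = v x" unfolding v_def by (simp add: algebra_simps)
    finally show ?thesis ..
  qed
  define \<kappa> where "\<kappa> = 2 * s / \<beta> - s^2"
  have k0: "\<kappa> > 0"
  proof -
    have "s * \<beta> < 2" unfolding s_def using gm gbm g0 by (simp add: field_simps)
    then have "s < 2 / \<beta>" using b0 by (simp add: field_simps)
    then have "s * s < s * (2 / \<beta>)" using s0 by (intro mult_strict_left_mono) auto
    then show ?thesis unfolding \<kappa>_def by (simp add: power2_eq_square mult.commute)
  qed
  have Anon: "(norm (A x - A y))\<^sup>2 \<le> (norm (x - y))\<^sup>2 - \<kappa> * (norm (H x - H y))\<^sup>2" for x y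
  proof -
    have co: "(norm (H x - H y))\<^sup>2 \<le> \<beta> * inner (H x - H y) (x - y)"
      unfolding H_def by (rule cocoercive[OF SC D Lip m0 b0])
    have "A x - A y = (x - y) - s *\<^sub>R (H x - H y)" unfolding A_def by (simp add: algebra_simps)
    then have e: "(norm (A x - A y))\<^sup>2 = (norm (x - y))\<^sup>2 - 2 * s * inner (x - y) (H x - H y) + s\<^sup>2 * (norm (H x - H y))\<^sup>2"
      by (simp add: norm_sq_expand)
    have "2 * s * ((norm (H x - H y))\<^sup>2 / \<beta>) \<le> 2 * s * inner (x - y) (H x - H y)"
      using co b0 s0 by (intro mult_left_mono) (auto simp: field_simps inner_commute)
    then show ?thesis unfolding e \<kappa>_def by (simp add: algebra_simps)
  qed
  have Ane: "norm (A x - A y) \<le> norm (x - y)" for x y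
  proof -
    have "(norm (A x - A y))\<^sup>2 \<le> (norm (x - y))\<^sup>2" using Anon[of x y] k0
      by (smt (verit) mult_nonneg_nonneg zero_le_power2)
    then show ?thesis by (rule power2_le_imp_le) simp
  qed
  have Tv: "norm (T x - T y) \<le> norm (v x - v y)" for x y
  proof -
    have "(norm (T x - T y))\<^sup>2 \<le> inner (v x - v y) (T x - T y)" by (rule P4[OF TPm TPm])
    also have "\<dots> \<le> norm (v x - v y) * norm (T x - T y)" by (rule norm_cauchy_schwarz)
    finally have h: "norm (T x - T y) * norm (T x - T y) \<le> norm (v x - v y) * norm (T x - T y)"
      by (simp add: power2_eq_square)
    show ?thesis
    proof (cases "norm (T x - T y) = 0")
      case True then show ?thesis by simp
    next
      case False then show ?thesis using h by (simp add: mult_le_cancel_right)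
    qed
  qed
  have Tlip: "norm (T x - T y) \<le> \<delta> * norm (x - y)" for x y
  proof -
    have "norm (v x - v y) = \<delta> * norm (A x - A y)"
      unfolding vA using d0 by (simp add: scaleR_diff_right[symmetric])
    also have "\<dots> \<le> \<delta> * norm (x - y)" using Ane d0 by (simp add: mult_left_mono)
    finally show ?thesis using Tv[of x y] by linarith
  qed
  have vx: "inner (v x - x) z / \<tau> = inner (\<omega> *\<^sub>R x - gradf x) z" for x z
  proof -
    have "v x - x = (\<gamma> / c) *\<^sub>R (\<omega> *\<^sub>R x - gradf x)"
    proof -
      have "v x - x = (1/c - 1) *\<^sub>R x - (\<gamma> / c) *\<^sub>R gradf x" unfolding v_def by (simp add: algebra_simps)
      also have "1/c - 1 = (\<gamma> / c) * \<omega>" unfolding c_def using c0 unfolding c_def by (simp add: field_simps)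
      finally show ?thesis by (simp add: algebra_simps)
    qed
    then show ?thesis unfolding \<tau>_def using g0 c0 by simp
  qed
  have sqx: "\<omega>/2 * (norm y)\<^sup>2 = \<omega>/2 * (norm x)\<^sup>2 + \<omega> * inner x (y - x) + \<omega>/2 * (norm (y - x))\<^sup>2" for x y :: 'a
    unfolding power2_norm_eq_inner by (simp add: inner_diff_left inner_diff_right inner_commute algebra_simps)
  have gfin: "g y = ereal (b - \<omega>/2 * (norm y)\<^sup>2)" if "gh y = ereal b" for y b
    using that gN[of y] unfolding gh_def by (cases "g y") auto
  have ghfin: "\<exists>b. gh y = ereal b" if "g y \<noteq> \<infinity>" for y
    using that gN[of y] unfolding gh_def by (cases "g y") auto
  have fix1: "x \<in> argmin_sum f g" if "T x = x" for x
  proof -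
    have pm: "Pm (v x) x" using TP that by blast
    obtain a where a: "gh x = ereal a" using P3[OF pm] by blast
    have m1: "\<And>y. gh x + ereal ((norm (v x - x))\<^sup>2 / (2*\<tau>)) \<le> gh y + ereal ((norm (v x - y))\<^sup>2 / (2*\<tau>))"
      using pm unfolding Pm_def by blast
    show ?thesis unfolding argmin_sum_def
    proof (rule CollectI, rule allI)
      fix y
      show "ereal (f x) + g x \<le> ereal (f y) + g y"
      proof (cases "g y = \<infinity>")
        case True then show ?thesis by simp
      next
        case False
        then obtain b where b: "gh y = ereal b" using ghfin by blast
        have vi: "inner (v x - x) (y - x) / \<tau> \<le> b - a" by (rule prox_vi[OF ghC ghN t0 m1 a b])
        have sl: "f x + inner (gradf x) (y - x) + \<mu>/2 * (norm (y - x))\<^sup>2 \<le> f y" by (rule sc_lower[OF SC D])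
        have "(\<mu> - \<omega>)/2 * (norm (y - x))\<^sup>2 \<ge> 0" using mw by simp
        then have "f x + (a - \<omega>/2 * (norm x)\<^sup>2) \<le> f y + (b - \<omega>/2 * (norm y)\<^sup>2)"
          using vi sl sqx[of y x] unfolding vx by (simp add: inner_diff_left algebra_simps)
        then show ?thesis using gfin[OF a] gfin[OF b] by simp
      qed
    qed
  qed
  have fix2: "T x = x" if am: "x \<in> argmin_sum f g" for x
  proof -
    have amin: "ereal (f x) + g x \<le> ereal (f y) + g y" for y using am unfolding argmin_sum_def by blast
    have "g x1 \<noteq> \<infinity>" using x1 unfolding gh_def by auto
    then have "g x \<noteq> \<infinity>" using amin[of x1] by auto
    then obtain a where a: "gh x = ereal a" using ghfin by blast
    have vi: "inner (\<omega> *\<^sub>R x - gradf x) (y - x) \<le> b - a" if b: "gh y = ereal b" for y b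
    proof -
      have "0 \<le> (b - a - inner (\<omega> *\<^sub>R x - gradf x) (y - x)) + t * ((\<beta> - \<omega>)/2 * (norm (y - x))\<^sup>2)"
        if t: "0 < t" "t \<le> 1" for t
      proof -
        define yt where "yt = t *\<^sub>R y + (1 - t) *\<^sub>R x"
        obtain ct where ct: "gh yt = ereal ct" "ct \<le> t * b + (1 - t) * a"
          using ec_real[OF ghC ghN b a, of t] t unfolding yt_def by auto
        have ytx: "yt - x = t *\<^sub>R (y - x)" unfolding yt_def by (simp add: algebra_simps)
        have "ereal (f x) + g x \<le> ereal (f yt) + g yt" by (rule amin)
        then have 1: "f x + (a - \<omega>/2 * (norm x)\<^sup>2) \<le> f yt + (ct - \<omega>/2 * (norm yt)\<^sup>2)"
          using gfin[OF a] gfin[OF ct(1)] by simp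
        have 2: "f yt \<le> f x + inner (gradf x) (yt - x) + \<beta>/2 * (norm (yt - x))\<^sup>2" by (rule descent[OF D Lip])
        have 3: "\<omega>/2 * (norm yt)\<^sup>2 = \<omega>/2 * (norm x)\<^sup>2 + \<omega> * inner x (yt - x) + \<omega>/2 * (norm (yt - x))\<^sup>2"
          by (rule sqx)
        have 4: "norm (yt - x) = t * norm (y - x)" unfolding ytx using t by simp
        have i1: "inner (gradf x) (yt - x) = t * inner (gradf x) (y - x)" unfolding ytx by simp
        have i2: "inner x (yt - x) = t * inner x (y - x)" unfolding ytx by simp
        have n2: "(norm (yt - x))\<^sup>2 = t\<^sup>2 * (norm (y - x))\<^sup>2" unfolding 4 by (simp add: power_mult_distrib)
        define P where "P = t * inner (gradf x) (y - x)"
        define Q where "Q = t * inner x (y - x)"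
        define R where "R = t\<^sup>2 * (norm (y - x))\<^sup>2"
        have h2: "f yt \<le> f x + P + \<beta>/2 * R" using 2 unfolding i1 n2 P_def R_def .
        have h3: "\<omega>/2 * (norm yt)\<^sup>2 = \<omega>/2 * (norm x)\<^sup>2 + \<omega> * Q + \<omega>/2 * R" using 3 unfolding i2 n2 Q_def R_def .
        have ct2: "ct \<le> t * b + a - t * a" using ct(2) by (simp add: algebra_simps)
        have "0 \<le> P + \<beta>/2 * R + t * b - t * a - \<omega> * Q - \<omega>/2 * R"
          using 1 h2 h3 ct2 by linarith
        also have "\<dots> = t * inner (gradf x) (y - x) + \<beta>/2 * t\<^sup>2 * (norm (y - x))\<^sup>2 + t * b - t * a
                  - \<omega> * t * inner x (y - x) - \<omega>/2 * t\<^sup>2 * (norm (y - x))\<^sup>2"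
          unfolding P_def Q_def R_def by (simp add: algebra_simps)
        also have "\<dots> = t * ((b - a - inner (\<omega> *\<^sub>R x - gradf x) (y - x)) + t * ((\<beta> - \<omega>)/2 * (norm (y - x))\<^sup>2))"
          by (simp add: inner_diff_left field_simps power2_eq_square)
        finally show ?thesis using t by (simp add: zero_le_mult_iff)
      qed
      then have "0 \<le> b - a - inner (\<omega> *\<^sub>R x - gradf x) (y - x)" by (rule eps_nonneg)
      then show ?thesis by simp
    qed
    have "Pm (v x) x" unfolding Pm_def
    proof
      fix y
      show "gh x + ereal ((norm (v x - x))\<^sup>2 / (2*\<tau>)) \<le> gh y + ereal ((norm (v x - y))\<^sup>2 / (2*\<tau>))"
      proof (cases "gh y = \<infinity>")
        case True then show ?thesis using a by simp
      next
        case False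
        then obtain b where b: "gh y = ereal b" using ghN[of y] by (cases "gh y") auto
        have e: "(norm (v x - y))\<^sup>2 = (norm (v x - x))\<^sup>2 - 2 * 1 * inner (v x - x) (y - x) + 1\<^sup>2 * (norm (y - x))\<^sup>2"
          using norm_sq_expand[of "v x - x" 1 "y - x"] by simp
        have "inner (v x - x) (y - x) / \<tau> \<le> b - a" using vi[OF b] unfolding vx .
        moreover have "(norm (y - x))\<^sup>2 / (2*\<tau>) \<ge> 0" using t0 by simp
        moreover have "(norm (v x - y))\<^sup>2 / (2*\<tau>) = (norm (v x - x))\<^sup>2 / (2*\<tau>) - inner (v x - x) (y - x) / \<tau> + (norm (y - x))\<^sup>2 / (2*\<tau>)"
          unfolding e using t0 by (simp add: field_simps)
        ultimately have "a + (norm (v x - x))\<^sup>2 / (2*\<tau>) \<le> b + (norm (v x - y))\<^sup>2 / (2*\<tau>)"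
          by linarith
        then show ?thesis using a b by simp
      qed
    qed
    then show ?thesis using TP by blast
  qed
  have FA: "fixpoints T = argmin_sum f g" unfolding fixpoints_def using fix1 fix2 by blast
  define xs where "xs n = (T ^^ n) x0" for n
  have xsS: "xs (Suc n) = T (xs n)" for n unfolding xs_def by simp
  obtain xb0 where xb0: "xb0 \<in> argmin_sum f g" using ne by blast
  have goal: "fixpoints T = argmin_sum f g \<and>
            (\<exists>xbar \<in> argmin_sum f g.
               weakly_converges xs xbar \<and>
               (\<mu> > \<omega> \<longrightarrow>
                  argmin_sum f g = {xbar} \<and>
                  xs \<longlonglongrightarrow> xbar \<and>
                  \<delta> < 1 \<and>
                  (\<forall>n. norm (xs n - xbar) \<le> \<delta> ^ n * norm (x0 - xbar))))"
  proof (cases "\<mu> > \<omega>")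
    case True
    have d1: "\<delta> < 1" unfolding \<delta>_def c_def using True g0 c0 gm unfolding c_def
      by (simp add: field_simps)
    have Tb: "T xb0 = xb0" using FA xb0 unfolding fixpoints_def by blast
    have rate: "norm (xs n - xb0) \<le> \<delta> ^ n * norm (x0 - xb0)" for n
    proof (induction n)
      case 0 then show ?case by (simp add: xs_def)
    next
      case (Suc n)
      have "norm (xs (Suc n) - xb0) = norm (T (xs n) - T xb0)" using Tb xsS by simp
      also have "\<dots> \<le> \<delta> * norm (xs n - xb0)" by (rule Tlip)
      also have "\<dots> \<le> \<delta> * (\<delta> ^ n * norm (x0 - xb0))" using Suc d0 by (simp add: mult_left_mono)
      finally show ?case by simp
    qed
    have "(\<lambda>n. \<delta> ^ n * norm (x0 - xb0)) \<longlonglongrightarrow> 0 * norm (x0 - xb0)"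
      by (intro tendsto_mult tendsto_const LIMSEQ_power_zero) (use d0 d1 in simp)
    then have r0: "(\<lambda>n. \<delta> ^ n * norm (x0 - xb0)) \<longlonglongrightarrow> 0" by simp
    have "(\<lambda>n. norm (xs n - xb0)) \<longlonglongrightarrow> 0"
    proof (rule tendsto_sandwich[OF _ _ tendsto_const r0])
      show "\<forall>\<^sub>F n in sequentially. 0 \<le> norm (xs n - xb0)" by simp
      show "\<forall>\<^sub>F n in sequentially. norm (xs n - xb0) \<le> \<delta> ^ n * norm (x0 - xb0)"
        using rate by simp
    qed
    then have strong: "xs \<longlonglongrightarrow> xb0"
      using tendsto_norm_zero_iff[of "\<lambda>n. xs n - xb0"] Lim_null by blast
    have weak: "weakly_converges xs xb0" unfolding weakly_converges_def
      using strong by (auto intro: tendsto_inner tendsto_const)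
    have uniq: "argmin_sum f g = {xb0}"
    proof
      show "argmin_sum f g \<subseteq> {xb0}"
      proof
        fix p assume "p \<in> argmin_sum f g"
        then have "T p = p" using FA unfolding fixpoints_def by blast
        then have "norm (p - xb0) \<le> \<delta> * norm (p - xb0)" using Tlip[of p xb0] Tb by simp
        then have "(1 - \<delta>) * norm (p - xb0) \<le> 0" by (simp add: algebra_simps)
        then have "norm (p - xb0) \<le> 0" using d1 by (simp add: mult_le_0_iff)
        then show "p \<in> {xb0}" by simp
      qed
    qed (use xb0 in simp)
    show ?thesis using FA xb0 weak uniq strong d1 rate by blast
  next
    case False
    then have mweq: "\<mu> = \<omega>" using mw by simp
    have d1: "\<delta> = 1" unfolding \<delta>_def c_def mweq using c0 unfolding c_def mweq by simp
    have vA1: "v x = A x" for x using vA d1 by simp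
    define c' where "c' = min (\<kappa> / (2 * s\<^sup>2)) (1/2)"
    have c'0: "c' > 0" unfolding c'_def using k0 s0 by simp
    have av: "(norm (T x - p))\<^sup>2 \<le> (norm (x - p))\<^sup>2 - c' * (norm (x - T x))\<^sup>2" if p: "T p = p" for x p
    proof -
      have pp: "Pm (v p) p" using TP p by blast
      define a where "a = v x"
      define b where "b = v p"
      define q where "q = T x"
      define e where "e = (a - q) - (b - p)"
      define dd where "dd = H x - H p"
      have fe: "(norm (q - p))\<^sup>2 \<le> inner (a - b) (q - p)" unfolding a_def b_def q_def
        by (rule P4[OF TPm pp])
      have ee: "(norm e)\<^sup>2 = (norm (a - b))\<^sup>2 - 2 * inner (a - b) (q - p) + (norm (q - p))\<^sup>2"
      proof -
        have "e = (a - b) - 1 *\<^sub>R (q - p)" unfolding e_def by (simp add: algebra_simps)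
        then show ?thesis using norm_sq_expand[of "a - b" 1 "q - p"] by simp
      qed
      have ab: "(norm (a - b))\<^sup>2 \<le> (norm (x - p))\<^sup>2 - \<kappa> * (norm dd)\<^sup>2"
        unfolding a_def b_def vA1 dd_def by (rule Anon)
      have xq: "x - q = s *\<^sub>R dd + e"
        unfolding e_def dd_def a_def b_def vA1 A_def using p unfolding q_def
        by (simp add: algebra_simps)
      have "(norm (x - q))\<^sup>2 \<le> 2 * (norm (s *\<^sub>R dd))\<^sup>2 + 2 * (norm e)\<^sup>2"
        unfolding xq by (rule norm_add_sq_le)
      also have "(norm (s *\<^sub>R dd))\<^sup>2 = s\<^sup>2 * (norm dd)\<^sup>2" using s0 by (simp add: power_mult_distrib)
      finally have xq2: "(norm (x - q))\<^sup>2 \<le> 2 * s\<^sup>2 * (norm dd)\<^sup>2 + 2 * (norm e)\<^sup>2" by simp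
      have "c' * (norm (x - q))\<^sup>2 \<le> c' * (2 * s\<^sup>2 * (norm dd)\<^sup>2 + 2 * (norm e)\<^sup>2)"
        using xq2 c'0 by (simp add: mult_left_mono)
      also have "\<dots> = (c' * (2 * s\<^sup>2)) * (norm dd)\<^sup>2 + (c' * 2) * (norm e)\<^sup>2" by (simp add: algebra_simps)
      also have "\<dots> \<le> \<kappa> * (norm dd)\<^sup>2 + 1 * (norm e)\<^sup>2"
      proof (intro add_mono mult_right_mono)
        have "c' \<le> \<kappa> / (2 * s\<^sup>2)" unfolding c'_def by simp
        then show "c' * (2 * s\<^sup>2) \<le> \<kappa>" using s0 by (simp add: field_simps)
        have "c' \<le> 1/2" unfolding c'_def by simp
        then show "c' * 2 \<le> 1" by simp
      qed auto
      finally have "c' * (norm (x - q))\<^sup>2 \<le> \<kappa> * (norm dd)\<^sup>2 + (norm e)\<^sup>2" by simp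
      with fe ee ab show ?thesis unfolding q_def by linarith
    qed
    have ne1: "norm (T x - T y) \<le> norm (x - y)" for x y using Tlip[of x y] d1 by simp
    have Tb: "T xb0 = xb0" using FA xb0 unfolding fixpoints_def by blast
    obtain z where z: "T z = z" "weakly_converges (\<lambda>n. (T ^^ n) x0) z"
      using opial[of T xb0 c' x0, OF ne1 Tb av c'0] by blast
    have "z \<in> argmin_sum f g" using FA z(1) unfolding fixpoints_def by blast
    then show ?thesis using FA z(2) False unfolding xs_def by blast
  qed
  have Teq: "(\<lambda>x. prox \<gamma> g (x - \<gamma> *\<^sub>R gradf x)) = T" unfolding T_def by (rule refl)
  have dd: "(1 - \<gamma> * \<mu>) / (1 - \<gamma> * \<omega>) = \<delta>" unfolding \<delta>_def c_def ..
  show ?thesis unfolding Let_def Teq dd using goal unfolding xs_def by blast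
qed

end
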